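(* Let $\Lambda^*$ be a factorial language in $(\mathbb F_+^d)^N$ and fix $\emptyset\ne F\subseteq[N]$, with $F^c=[N]\setminus F$. The following are equivalent: (i) there exists $a\in\bigcap_{i\in F}\ker\phi_{\mathbf i}$ with $aQ_{F^c}\ne0$; (ii) there exists $a\in A$ with $aQ_{F^c}=Q_{\underline\emptyset}$; (iii) for every $\delta_i(k)\in\Lambda^*$ with $(i,k)\in F\times[d]$ there exists $\underline\mu\in\Lambda^*$ with $\underline\mu*\delta_i(k)\notin\Lambda^*$. If $F=[N]$, then (iii) is moreover equivalent to each of: (iv) $\bigcap_{i\in[N]}\ker\phi_{\mathbf i}=\mathbb CQ_{\underline\emptyset}$; (v) $\bigcap_{i\in[N]}\ker\phi_{\mathbf i}\ne(0)$; (vi) $Q_{\underline\emptyset}\in A$.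
   Context: $\mathbb F_+^d$ is the free semigroup on letters $[d]$ with empty word $\emptyset$. In $(\mathbb F_+^d)^N$: $\underline\mu*\underline\nu=(\mu_1\nu_1,\dots,\mu_N\nu_N)$; $|\underline\mu|=(|\mu_1|,\dots,|\mu_N|)$; $\delta_i(k)$ has the letter $k$ in coordinate $i$ and $\emptyset$ elsewhere; $\underline\emptyset=(\emptyset,\dots,\emptyset)$. A factorial language $\Lambda^*\subseteq(\mathbb F_+^d)^N$: for every $i\in[N]$ some $\delta_i(k)\in\Lambda^*$, and $\Lambda^*$ is closed under subwords. On $\ell^2(\Lambda^* )$ with basis $\{e_{\underline w}\}$, $T_{\underline\mu}e_{\underline w}=e_{\underline\mu*\underline w}$ if $\underline\mu*\underline w\in\Lambda^*$, $0$ otherwise. $A=C^*(T_{\underline\mu}^*T_{\underline\mu}:\underline\mu\in\Lambda^* )$. For $i\in[N]$, $P_{\mathbf i}=\sum_{k\in[d]}T_{\delta_i(k)}T_{\delta_i(k)}^*$; for $G\subseteq[N]$, $Q_G=\prod_{i\in G}(I-P_{\mathbf i})$ (with $Q_\emptyset=I$ for the empty set $G$). $Q_{\underline\emptyset}$ denotes the rank-one projection onto $\mathbb Ce_{\underline\emptyset}$ (it equals $Q_{[N]}$). $X_{\mathbf i}(\Lambda^* )=\overline{\operatorname{span}}\{T_{\delta_i(k)}a:a\in A,\ \delta_i(k)\in\Lambda^*\}$ and $\ker\phi_{\mathbf i}=\{a\in A:a\xi=0\ \forall\xi\in X_{\mathbf i}(\Lambda^* )\}$. *)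

theory Defs
  imports "HOL-Analysis.Analysis" "HOL-Library.Function_Algebras" "HOL-Library.Sublist"
begin

(* An N-tuple of words over the letters [d] = {1..d}, coordinates indexed by [N] = {1..N};
   coordinates outside [N] are required (by the language predicate) to be empty. *)
type_synonym tup = "nat \<Rightarrow> nat list"
type_synonym vec = "tup \<Rightarrow> complex"
type_synonym op = "vec \<Rightarrow> vec"

definition tcat :: "tup \<Rightarrow> tup \<Rightarrow> tup" (infixl "\<star>" 70) where
  "\<mu> \<star> \<nu> = (\<lambda>i. \<mu> i @ \<nu> i)"

definition delta :: "nat \<Rightarrow> nat \<Rightarrow> tup" where
  "delta i k = (\<lambda>j. if j = i then [k] else [])"

definition tempty :: tup where
  "tempty = (\<lambda>j. [])"

definition factorial_language :: "nat \<Rightarrow> nat \<Rightarrow> tup set \<Rightarrow> bool" where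
  "factorial_language d N L \<longleftrightarrow>
     (\<forall>w\<in>L. \<forall>i. (i \<notin> {1..N} \<longrightarrow> w i = []) \<and> set (w i) \<subseteq> {1..d}) \<and>
     (\<forall>i\<in>{1..N}. \<exists>k\<in>{1..d}. delta i k \<in> L) \<and>
     (\<forall>\<alpha> \<nu> \<beta>. \<alpha> \<star> \<nu> \<star> \<beta> \<in> L \<longrightarrow> \<nu> \<in> L)"

definition l2 :: "tup set \<Rightarrow> vec set" where
  "l2 L = {\<xi>. (\<forall>w. w \<notin> L \<longrightarrow> \<xi> w = 0) \<and> (\<lambda>w. (cmod (\<xi> w))\<^sup>2) summable_on L}"

definition l2norm :: "tup set \<Rightarrow> vec \<Rightarrow> real" where
  "l2norm L \<xi> = sqrt (infsum (\<lambda>w. (cmod (\<xi> w))\<^sup>2) L)"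

definition l2inner :: "tup set \<Rightarrow> vec \<Rightarrow> vec \<Rightarrow> complex" where
  "l2inner L \<xi> \<eta> = infsum (\<lambda>w. cnj (\<xi> w) * \<eta> w) L"

definition vsc :: "complex \<Rightarrow> vec \<Rightarrow> vec" where
  "vsc c \<xi> = (\<lambda>w. c * \<xi> w)"

(* bounded operators on l^2(L); normalised to be 0 outside l^2(L) *)
definition Bop :: "tup set \<Rightarrow> op set" where
  "Bop L = {T. (\<forall>\<xi>. \<xi> \<notin> l2 L \<longrightarrow> T \<xi> = 0) \<and> (\<forall>\<xi>\<in>l2 L. T \<xi> \<in> l2 L) \<and>
     (\<forall>\<xi>\<in>l2 L. \<forall>\<eta>\<in>l2 L. \<forall>c. T (\<xi> + \<eta>) = T \<xi> + T \<eta> \<and> T (vsc c \<xi>) = vsc c (T \<xi>)) \<and>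
     (\<exists>C. \<forall>\<xi>\<in>l2 L. l2norm L (T \<xi>) \<le> C * l2norm L \<xi>)}"

definition opnorm :: "tup set \<Rightarrow> op \<Rightarrow> real" where
  "opnorm L T = Sup {l2norm L (T \<xi>) / l2norm L \<xi> | \<xi>. \<xi> \<in> l2 L}"

definition osc :: "complex \<Rightarrow> op \<Rightarrow> op" where
  "osc c a = (\<lambda>\<xi>. vsc c (a \<xi>))"

definition Iop :: "tup set \<Rightarrow> op" where
  "Iop L = (\<lambda>\<xi>. if \<xi> \<in> l2 L then \<xi> else 0)"

definition adj :: "tup set \<Rightarrow> op \<Rightarrow> op" where
  "adj L T = (THE S. S \<in> Bop L \<and>
      (\<forall>\<xi>\<in>l2 L. \<forall>\<eta>\<in>l2 L. l2inner L (T \<xi>) \<eta> = l2inner L \<xi> (S \<eta>)))"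

definition norm_closed :: "tup set \<Rightarrow> op set \<Rightarrow> bool" where
  "norm_closed L S \<longleftrightarrow> (\<forall>f b. (\<forall>n. f n \<in> S) \<longrightarrow> b \<in> Bop L \<longrightarrow>
      (\<lambda>n. opnorm L (f n - b)) \<longlonglongrightarrow> 0 \<longrightarrow> b \<in> S)"

definition cstar :: "tup set \<Rightarrow> op set \<Rightarrow> op set" where
  "cstar L G = \<Inter>{S. G \<subseteq> S \<and> S \<subseteq> Bop L \<and>
      (\<forall>a\<in>S. \<forall>b\<in>S. a + b \<in> S \<and> a \<circ> b \<in> S) \<and> (\<forall>a\<in>S. \<forall>c. osc c a \<in> S) \<and>
      (\<forall>a\<in>S. adj L a \<in> S) \<and> norm_closed L S}"

definition clspan :: "tup set \<Rightarrow> op set \<Rightarrow> op set" where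
  "clspan L G = \<Inter>{S. G \<subseteq> S \<and> S \<subseteq> Bop L \<and> 0 \<in> S \<and>
      (\<forall>a\<in>S. \<forall>b\<in>S. a + b \<in> S) \<and> (\<forall>a\<in>S. \<forall>c. osc c a \<in> S) \<and> norm_closed L S}"

(* T_mu e_w = e_{mu*w} if mu*w \<in> L, else 0 *)
definition Tm :: "tup set \<Rightarrow> tup \<Rightarrow> op" where
  "Tm L \<mu> = (\<lambda>\<xi>. if \<xi> \<in> l2 L then
      (\<lambda>v. if v \<in> L \<and> (\<forall>i. prefix (\<mu> i) (v i)) then \<xi> (\<lambda>i. drop (length (\<mu> i)) (v i)) else 0)
    else 0)"

definition Aalg :: "tup set \<Rightarrow> op set" where
  "Aalg L = cstar L {adj L (Tm L \<mu>) \<circ> Tm L \<mu> | \<mu>. \<mu> \<in> L}"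

definition Pi :: "tup set \<Rightarrow> nat \<Rightarrow> nat \<Rightarrow> op" where
  "Pi L d i = (\<Sum>k\<in>{1..d}. Tm L (delta i k) \<circ> adj L (Tm L (delta i k)))"

definition QG :: "tup set \<Rightarrow> nat \<Rightarrow> nat set \<Rightarrow> op" where
  "QG L d G = foldr (\<lambda>i acc. (Iop L - Pi L d i) \<circ> acc) (sorted_list_of_set G) (Iop L)"

definition Qempty :: "tup set \<Rightarrow> op" where
  "Qempty L = (\<lambda>\<xi>. if \<xi> \<in> l2 L then (\<lambda>w. if w = tempty then \<xi> tempty else 0) else 0)"

definition Xi :: "tup set \<Rightarrow> nat \<Rightarrow> nat \<Rightarrow> op set" where
  "Xi L d i = clspan L {Tm L (delta i k) \<circ> a | k a. k \<in> {1..d} \<and> a \<in> Aalg L \<and> delta i k \<in> L}"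

definition kerphi :: "tup set \<Rightarrow> nat \<Rightarrow> nat \<Rightarrow> op set" where
  "kerphi L d i = {a \<in> Aalg L. \<forall>\<xi>\<in>Xi L d i. a \<circ> \<xi> = 0}"

end

theory Submission
  imports Defs
begin


lemma sum_cmp:
  fixes f g :: "'a \<Rightarrow> real"
  assumes "g summable_on A" "\<And>x. x\<in>A \<Longrightarrow> 0 \<le> f x" "\<And>x. x\<in>A \<Longrightarrow> f x \<le> g x"
  shows "f summable_on A"
proof -
  have "(\<lambda>x. norm (g x)) summable_on A"
    using assms(1) by (rule summable_on_cong[THEN iffD1, rotated]) (use assms in force)
  hence "(\<lambda>x. norm (f x)) summable_on A"
    by (rule Infinite_Sum.abs_summable_on_comparison_test) (use assms in force)
  thus ?thesis by (rule summable_on_cong[THEN iffD1, rotated]) (use assms in force)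
qed

lemma l2_point_sq:
  assumes "\<xi> \<in> l2 L"
  shows "(cmod (\<xi> w))\<^sup>2 \<le> infsum (\<lambda>w. (cmod (\<xi> w))\<^sup>2) L"
proof (cases "w \<in> L")
  case False
  then have "\<xi> w = 0" using assms by (simp add: l2_def)
  then show ?thesis by (simp add: infsum_nonneg)
next
  case True
  have s: "(\<lambda>w. (cmod (\<xi> w))\<^sup>2) summable_on L" using assms by (simp add: l2_def)
  have "infsum (\<lambda>w. (cmod (\<xi> w))\<^sup>2) {w} \<le> infsum (\<lambda>w. (cmod (\<xi> w))\<^sup>2) L"
    by (rule infsum_mono2) (use s True in auto)
  then show ?thesis by simp
qed

lemma l2_point:
  assumes "\<xi> \<in> l2 L"
  shows "cmod (\<xi> w) \<le> l2norm L \<xi>"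
  unfolding l2norm_def using l2_point_sq[OF assms] by (simp add: real_le_rsqrt)

lemma l2norm_nonneg: "l2norm L \<xi> \<ge> 0"
  unfolding l2norm_def by (simp add: infsum_nonneg)

lemma l2_zero[simp]: "0 \<in> l2 L"
  by (simp add: l2_def)

lemma l2_mult:
  assumes "\<xi> \<in> l2 L" "\<And>w. w \<in> L \<Longrightarrow> cmod (c w) \<le> C"
  shows "(\<lambda>w. c w * \<xi> w) \<in> l2 L" and "l2norm L (\<lambda>w. c w * \<xi> w) \<le> max C 0 * l2norm L \<xi>"
proof -
  have s: "(\<lambda>w. (cmod (\<xi> w))\<^sup>2) summable_on L" using assms by (simp add: l2_def)
  have s2: "(\<lambda>w. (max C 0)\<^sup>2 * (cmod (\<xi> w))\<^sup>2) summable_on L"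
    using summable_on_cmult_right[OF s] by simp
  have le: "(cmod (c w * \<xi> w))\<^sup>2 \<le> (max C 0)\<^sup>2 * (cmod (\<xi> w))\<^sup>2" if "w \<in> L" for w
  proof -
    have "cmod (c w * \<xi> w) \<le> max C 0 * cmod (\<xi> w)"
      using assms(2)[OF that] by (simp add: norm_mult mult_right_mono)
    hence "(cmod (c w * \<xi> w))\<^sup>2 \<le> (max C 0 * cmod (\<xi> w))\<^sup>2"
      by (simp add: power_mono)
    thus ?thesis by (simp add: power_mult_distrib)
  qed
  have s3: "(\<lambda>w. (cmod (c w * \<xi> w))\<^sup>2) summable_on L"
    by (rule sum_cmp[OF s2]) (use le in auto)
  show "(\<lambda>w. c w * \<xi> w) \<in> l2 L" using assms(1) s3 by (simp add: l2_def)
  have "infsum (\<lambda>w. (cmod (c w * \<xi> w))\<^sup>2) L \<le> infsum (\<lambda>w. (max C 0)\<^sup>2 * (cmod (\<xi> w))\<^sup>2) L"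
    by (rule infsum_mono[OF s3 s2]) (use le in auto)
  also have "\<dots> = (max C 0)\<^sup>2 * infsum (\<lambda>w. (cmod (\<xi> w))\<^sup>2) L"
    by (rule infsum_cmult_right) (use s in auto)
  finally have "sqrt (infsum (\<lambda>w. (cmod (c w * \<xi> w))\<^sup>2) L) \<le> sqrt ((max C 0)\<^sup>2 * infsum (\<lambda>w. (cmod (\<xi> w))\<^sup>2) L)"
    using real_sqrt_le_mono by blast
  also have "\<dots> = max C 0 * l2norm L \<xi>"
    unfolding l2norm_def by (simp add: real_sqrt_mult)
  finally show "l2norm L (\<lambda>w. c w * \<xi> w) \<le> max C 0 * l2norm L \<xi>" unfolding l2norm_def .
qed

lemma l2_add:
  assumes "\<xi> \<in> l2 L" "\<eta> \<in> l2 L"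
  shows "\<xi> + \<eta> \<in> l2 L" and "(l2norm L (\<xi> + \<eta>))\<^sup>2 \<le> 2 * (l2norm L \<xi>)\<^sup>2 + 2 * (l2norm L \<eta>)\<^sup>2"
proof -
  have s1: "(\<lambda>w. (cmod (\<xi> w))\<^sup>2) summable_on L" and s2: "(\<lambda>w. (cmod (\<eta> w))\<^sup>2) summable_on L"
    using assms by (auto simp: l2_def)
  have s: "(\<lambda>w. 2 * (cmod (\<xi> w))\<^sup>2 + 2 * (cmod (\<eta> w))\<^sup>2) summable_on L"
    by (intro summable_on_add summable_on_cmult_right s1 s2)
  have le: "(cmod (\<xi> w + \<eta> w))\<^sup>2 \<le> 2 * (cmod (\<xi> w))\<^sup>2 + 2 * (cmod (\<eta> w))\<^sup>2" for w
  proof -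
    have "cmod (\<xi> w + \<eta> w) \<le> cmod (\<xi> w) + cmod (\<eta> w)" by (rule norm_triangle_ineq)
    hence "(cmod (\<xi> w + \<eta> w))\<^sup>2 \<le> (cmod (\<xi> w) + cmod (\<eta> w))\<^sup>2" by (simp add: power_mono)
    also have "\<dots> \<le> 2 * (cmod (\<xi> w))\<^sup>2 + 2 * (cmod (\<eta> w))\<^sup>2"
      using zero_le_power2[of "cmod (\<xi> w) - cmod (\<eta> w)"] by (simp add: power2_eq_square algebra_simps)
    finally show ?thesis .
  qed
  have s3: "(\<lambda>w. (cmod ((\<xi> + \<eta>) w))\<^sup>2) summable_on L"
    by (rule sum_cmp[OF s]) (use le in auto)
  show "\<xi> + \<eta> \<in> l2 L" using assms s3 by (simp add: l2_def)
  have "infsum (\<lambda>w. (cmod ((\<xi> + \<eta>) w))\<^sup>2) L \<le> infsum (\<lambda>w. 2 * (cmod (\<xi> w))\<^sup>2 + 2 * (cmod (\<eta> w))\<^sup>2) L"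
    by (rule infsum_mono[OF s3 s]) (use le in auto)
  also have "\<dots> = 2 * infsum (\<lambda>w. (cmod (\<xi> w))\<^sup>2) L + 2 * infsum (\<lambda>w. (cmod (\<eta> w))\<^sup>2) L"
    by (subst infsum_add) (auto intro: summable_on_cmult_right s1 s2 simp: infsum_cmult_right s1 s2)
  finally show "(l2norm L (\<xi> + \<eta>))\<^sup>2 \<le> 2 * (l2norm L \<xi>)\<^sup>2 + 2 * (l2norm L \<eta>)\<^sup>2"
    unfolding l2norm_def by (simp add: infsum_nonneg)
qed

lemma l2_scale:
  assumes "\<xi> \<in> l2 L"
  shows "vsc c \<xi> \<in> l2 L" and "l2norm L (vsc c \<xi>) \<le> cmod c * l2norm L \<xi>"
  using l2_mult[OF assms, of "\<lambda>_. c" "cmod c"] by (auto simp: vsc_def)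

lemma l2_uminus:
  assumes "\<xi> \<in> l2 L"
  shows "- \<xi> \<in> l2 L" and "l2norm L (- \<xi>) \<le> l2norm L \<xi>"
proof -
  have e: "- \<xi> = (\<lambda>w. (-1) * \<xi> w)" by auto
  show "- \<xi> \<in> l2 L" "l2norm L (- \<xi>) \<le> l2norm L \<xi>"
    using l2_mult[OF assms, of "\<lambda>_. -1" 1] unfolding e by auto
qed



definition bv :: "tup \<Rightarrow> vec" where "bv w = (\<lambda>v. if v = w then 1 else 0)"

lemma bv_l2: assumes "w \<in> L" shows "bv w \<in> l2 L" and "l2norm L (bv w) = 1"
proof -
  have e: "infsum (\<lambda>v. (cmod (bv w v))\<^sup>2) L = infsum (\<lambda>v. (cmod (bv w v))\<^sup>2) {w}"
    by (rule infsum_cong_neutral) (use assms in \<open>auto simp: bv_def\<close>)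
  have s: "(\<lambda>v. (cmod (bv w v))\<^sup>2) summable_on L"
  proof -
    have "(\<lambda>v. (cmod (bv w v))\<^sup>2) summable_on {w}" by simp
    moreover have "(\<lambda>v. (cmod (bv w v))\<^sup>2) summable_on {w} \<longleftrightarrow> (\<lambda>v. (cmod (bv w v))\<^sup>2) summable_on L"
      by (rule summable_on_cong_neutral) (use assms in \<open>auto simp: bv_def\<close>)
    ultimately show ?thesis by blast
  qed
  show "bv w \<in> l2 L" using s assms by (auto simp: l2_def bv_def)
  show "l2norm L (bv w) = 1" unfolding l2norm_def e by (simp add: bv_def)
qed

lemma l2inner_bv: assumes "w \<in> L" shows "l2inner L (bv w) \<eta> = \<eta> w"
proof -
  have "l2inner L (bv w) \<eta> = infsum (\<lambda>v. cnj (bv w v) * \<eta> v) {w}"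
    unfolding l2inner_def by (rule infsum_cong_neutral) (use assms in \<open>auto simp: bv_def\<close>)
  thus ?thesis by (simp add: bv_def)
qed

lemma l2_zero_outside: "\<xi> \<in> l2 L \<Longrightarrow> w \<notin> L \<Longrightarrow> \<xi> w = 0"
  by (simp add: l2_def)

lemma Bop_out: "T \<in> Bop L \<Longrightarrow> \<xi> \<notin> l2 L \<Longrightarrow> T \<xi> = 0"
  by (simp add: Bop_def)
lemma Bop_l2: "T \<in> Bop L \<Longrightarrow> \<xi> \<in> l2 L \<Longrightarrow> T \<xi> \<in> l2 L"
  by (simp add: Bop_def)
lemma Bop_add: "T \<in> Bop L \<Longrightarrow> \<xi> \<in> l2 L \<Longrightarrow> \<eta> \<in> l2 L \<Longrightarrow> T (\<xi> + \<eta>) = T \<xi> + T \<eta>"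
  by (simp add: Bop_def)
lemma Bop_vsc: "T \<in> Bop L \<Longrightarrow> \<xi> \<in> l2 L \<Longrightarrow> T (vsc c \<xi>) = vsc c (T \<xi>)"
  by (simp add: Bop_def)
lemma Bop_zero: "T \<in> Bop L \<Longrightarrow> T 0 = 0"
  using Bop_add[of T L 0 0] by simp
lemma Bop_bound: assumes "T \<in> Bop L"
  shows "\<exists>C\<ge>0. \<forall>\<xi>\<in>l2 L. l2norm L (T \<xi>) \<le> C * l2norm L \<xi>"
proof -
  obtain C where C: "\<forall>\<xi>\<in>l2 L. l2norm L (T \<xi>) \<le> C * l2norm L \<xi>" using assms by (auto simp: Bop_def)
  have "\<forall>\<xi>\<in>l2 L. l2norm L (T \<xi>) \<le> max C 0 * l2norm L \<xi>"
    using C by (meson order_trans mult_right_mono max.cobounded1 l2norm_nonneg)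
  thus ?thesis by (intro exI[of _ "max C 0"]) auto
qed

lemma opnorm_le:
  assumes C: "\<forall>\<xi>\<in>l2 L. l2norm L (T \<xi>) \<le> C * l2norm L \<xi>" and x: "\<xi> \<in> l2 L"
  shows "l2norm L (T \<xi>) \<le> opnorm L T * l2norm L \<xi>"
proof (cases "l2norm L \<xi> = 0")
  case True
  then show ?thesis using C x by force
next
  case False
  hence pos: "l2norm L \<xi> > 0" using l2norm_nonneg[of L \<xi>] by linarith
  have bdd: "bdd_above {l2norm L (T \<xi>) / l2norm L \<xi> | \<xi>. \<xi> \<in> l2 L}"
  proof (rule bdd_aboveI)
    fix r assume "r \<in> {l2norm L (T \<xi>) / l2norm L \<xi> | \<xi>. \<xi> \<in> l2 L}"
    then obtain \<eta> where h: "\<eta> \<in> l2 L" and r: "r = l2norm L (T \<eta>) / l2norm L \<eta>" by blast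
    show "r \<le> max C 0"
    proof (cases "l2norm L \<eta> = 0")
      case True then show ?thesis using r by simp
    next
      case False
      hence "l2norm L \<eta> > 0" using l2norm_nonneg[of L \<eta>] by linarith
      moreover have "l2norm L (T \<eta>) \<le> max C 0 * l2norm L \<eta>"
        using C h by (meson order_trans mult_right_mono max.cobounded1 l2norm_nonneg)
      ultimately show ?thesis using r by (simp add: divide_le_eq)
    qed
  qed
  have "l2norm L (T \<xi>) / l2norm L \<xi> \<le> opnorm L T"
    unfolding opnorm_def by (rule cSup_upper[OF _ bdd]) (use x in auto)
  thus ?thesis using pos by (simp add: divide_le_eq)
qed

lemma diff_bound:
  assumes "f \<in> Bop L" "b \<in> Bop L"
  shows "\<exists>C. \<forall>\<xi>\<in>l2 L. l2norm L ((f - b) \<xi>) \<le> C * l2norm L \<xi>"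
proof -
  obtain C1 where C1: "C1 \<ge> 0" "\<forall>\<xi>\<in>l2 L. l2norm L (f \<xi>) \<le> C1 * l2norm L \<xi>" using Bop_bound[OF assms(1)] by blast
  obtain C2 where C2: "C2 \<ge> 0" "\<forall>\<xi>\<in>l2 L. l2norm L (b \<xi>) \<le> C2 * l2norm L \<xi>" using Bop_bound[OF assms(2)] by blast
  have "l2norm L ((f - b) \<xi>) \<le> (2 * C1 + 2 * C2) * l2norm L \<xi>" if x: "\<xi> \<in> l2 L" for \<xi>
  proof -
    have fx: "f \<xi> \<in> l2 L" and bx: "b \<xi> \<in> l2 L" using x assms by (auto simp: Bop_l2)
    have e: "(f - b) \<xi> = f \<xi> + (- b \<xi>)" by simp
    have "(l2norm L ((f - b) \<xi>))\<^sup>2 \<le> 2 * (l2norm L (f \<xi>))\<^sup>2 + 2 * (l2norm L (- b \<xi>))\<^sup>2"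
      unfolding e by (rule l2_add(2)[OF fx l2_uminus(1)[OF bx]])
    also have "\<dots> \<le> 2 * (C1 * l2norm L \<xi>)\<^sup>2 + 2 * (C2 * l2norm L \<xi>)\<^sup>2"
    proof -
      have "l2norm L (- b \<xi>) \<le> C2 * l2norm L \<xi>" using l2_uminus(2)[OF bx] C2 x by force
      hence a: "(l2norm L (- b \<xi>))\<^sup>2 \<le> (C2 * l2norm L \<xi>)\<^sup>2" by (simp add: l2norm_nonneg power_mono)
      have b: "(l2norm L (f \<xi>))\<^sup>2 \<le> (C1 * l2norm L \<xi>)\<^sup>2" using C1 x by (simp add: l2norm_nonneg power_mono)
      show ?thesis using a b by linarith
    qed
    also have "\<dots> \<le> ((2 * C1 + 2 * C2) * l2norm L \<xi>)\<^sup>2"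
    proof -
      define n where "n = l2norm L \<xi>"
      have "0 \<le> n" unfolding n_def by (rule l2norm_nonneg)
      hence "0 \<le> C1 * C1 * (n * n)" "0 \<le> C2 * C2 * (n * n)" "0 \<le> C1 * C2 * (n * n)"
        using C1(1) C2(1) by auto
      hence "2 * (C1 * n)\<^sup>2 + 2 * (C2 * n)\<^sup>2 \<le> ((2 * C1 + 2 * C2) * n)\<^sup>2"
        unfolding power2_eq_square by (simp add: algebra_simps)
      thus ?thesis unfolding n_def .
    qed
    finally have h: "(l2norm L ((f - b) \<xi>))\<^sup>2 \<le> ((2 * C1 + 2 * C2) * l2norm L \<xi>)\<^sup>2" .
    show ?thesis
      by (rule power2_le_imp_le[OF h]) (use C1(1) C2(1) l2norm_nonneg[of L \<xi>] in simp)
  qed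
  thus ?thesis by blast
qed

lemma diff_l2: assumes f: "f \<in> Bop L" and b: "b \<in> Bop L" and x: "\<xi> \<in> l2 L" shows "(f - b) \<xi> \<in> l2 L"
proof -
  have e: "(f - b) \<xi> = f \<xi> + (- b \<xi>)" by simp
  show ?thesis unfolding e by (rule l2_add(1)[OF Bop_l2[OF f x] l2_uminus(1)[OF Bop_l2[OF b x]]])
qed

lemma ptwise_lim:
  assumes f: "\<And>n. f n \<in> Bop L" and b: "b \<in> Bop L" and lim: "(\<lambda>n. opnorm L (f n - b)) \<longlonglongrightarrow> 0"
    and x: "\<xi> \<in> l2 L"
  shows "(\<lambda>n. f n \<xi> w) \<longlonglongrightarrow> b \<xi> w"
proof (rule LIM_zero_cancel, rule Lim_null_comparison)
  show "\<forall>\<^sub>F n in sequentially. norm (f n \<xi> w - b \<xi> w) \<le> opnorm L (f n - b) * l2norm L \<xi>"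
  proof (rule always_eventually, rule allI)
    fix n
    obtain C where C: "\<forall>\<xi>\<in>l2 L. l2norm L ((f n - b) \<xi>) \<le> C * l2norm L \<xi>" using diff_bound[OF f b] by blast
    have "norm (f n \<xi> w - b \<xi> w) = cmod (((f n - b) \<xi>) w)" by simp
    also have "\<dots> \<le> l2norm L ((f n - b) \<xi>)" by (rule l2_point[OF diff_l2[OF f b x]])
    also have "\<dots> \<le> opnorm L (f n - b) * l2norm L \<xi>" by (rule opnorm_le[OF C x])
    finally show "norm (f n \<xi> w - b \<xi> w) \<le> opnorm L (f n - b) * l2norm L \<xi>" .
  qed
  show "(\<lambda>n. opnorm L (f n - b) * l2norm L \<xi>) \<longlonglongrightarrow> 0"
    using tendsto_mult_left_zero[OF lim] by simp
qed



definition bnd :: "tup set \<Rightarrow> (tup \<Rightarrow> complex) \<Rightarrow> bool" where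
  "bnd L c \<longleftrightarrow> (\<exists>C. \<forall>w\<in>L. cmod (c w) \<le> C)"

definition mop :: "tup set \<Rightarrow> (tup \<Rightarrow> complex) \<Rightarrow> op" where
  "mop L c = (\<lambda>\<xi>. if \<xi> \<in> l2 L then (\<lambda>w. c w * \<xi> w) else 0)"

lemma mop_l2: "bnd L c \<Longrightarrow> \<xi> \<in> l2 L \<Longrightarrow> mop L c \<xi> \<in> l2 L"
  unfolding bnd_def mop_def by (auto intro: l2_mult(1))

lemma mop_Bop: assumes "bnd L c" shows "mop L c \<in> Bop L"
proof -
  obtain C where C: "\<forall>w\<in>L. cmod (c w) \<le> C" using assms by (auto simp: bnd_def)
  have "\<forall>\<xi>\<in>l2 L. \<forall>\<eta>\<in>l2 L. \<forall>k. mop L c (\<xi> + \<eta>) = mop L c \<xi> + mop L c \<eta> \<and> mop L c (vsc k \<xi>) = vsc k (mop L c \<xi>)"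
    using l2_add(1) l2_scale(1) by (auto simp: mop_def vsc_def fun_eq_iff algebra_simps)
  moreover have "\<forall>\<xi>\<in>l2 L. l2norm L (mop L c \<xi>) \<le> max C 0 * l2norm L \<xi>"
    using l2_mult(2) C by (auto simp: mop_def)
  ultimately show ?thesis using mop_l2[OF assms] by (auto simp: Bop_def mop_def)
qed

lemma mop_cong: "(\<And>w. w \<in> L \<Longrightarrow> c w = c' w) \<Longrightarrow> mop L c = mop L c'"
  unfolding mop_def by (auto simp: fun_eq_iff l2_def)

lemma mop_comp: "bnd L c' \<Longrightarrow> mop L c \<circ> mop L c' = mop L (\<lambda>w. c w * c' w)"
  using mop_l2[of L c'] by (auto simp: mop_def fun_eq_iff)

lemma mop_plus: "mop L c + mop L c' = mop L (\<lambda>w. c w + c' w)"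
  by (auto simp: mop_def fun_eq_iff algebra_simps)

lemma osc_mop: "osc k (mop L c) = mop L (\<lambda>w. k * c w)"
  by (auto simp: mop_def osc_def vsc_def fun_eq_iff)

lemma mop_bv: "w \<in> L \<Longrightarrow> mop L c (bv w) w = c w"
  using bv_l2(1) by (auto simp: mop_def bv_def)

lemma bnd_const[simp]: "bnd L (\<lambda>_. k)"
  unfolding bnd_def by auto

lemma bnd_ind: "(\<And>w. c w = 0 \<or> c w = 1) \<Longrightarrow> bnd L c"
  unfolding bnd_def by (metis norm_one norm_zero order_refl zero_le_one)

lemma bnd_mult: "bnd L c \<Longrightarrow> bnd L c' \<Longrightarrow> bnd L (\<lambda>w. c w * c' w)"
  unfolding bnd_def
proof (elim exE)
  fix C C' assume C: "\<forall>w\<in>L. cmod (c w) \<le> C" and C': "\<forall>w\<in>L. cmod (c' w) \<le> C'"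
  have "cmod (c w * c' w) \<le> C * C'" if "w \<in> L" for w
    unfolding norm_mult by (rule mult_mono) (use C C' that in \<open>auto intro: order_trans[OF norm_ge_zero]\<close>)
  thus "\<exists>C. \<forall>w\<in>L. cmod (c w * c' w) \<le> C" by blast
qed

lemma bnd_plus: "bnd L c \<Longrightarrow> bnd L c' \<Longrightarrow> bnd L (\<lambda>w. c w + c' w)"
  unfolding bnd_def by (meson add_mono norm_triangle_le)

lemma bnd_scale: "bnd L c \<Longrightarrow> bnd L (\<lambda>w. k * c w)"
  using bnd_mult[of L "\<lambda>_. k" c] by simp

lemma bnd_cnj: "bnd L c \<Longrightarrow> bnd L (\<lambda>w. cnj (c w))"
  unfolding bnd_def by simp

lemma adj_unique:
  assumes S: "S \<in> Bop L" and rel: "\<forall>\<xi>\<in>l2 L. \<forall>\<eta>\<in>l2 L. l2inner L (T \<xi>) \<eta> = l2inner L \<xi> (S \<eta>)"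
  shows "adj L T = S"
  unfolding adj_def
proof (rule the_equality)
  show "S \<in> Bop L \<and> (\<forall>\<xi>\<in>l2 L. \<forall>\<eta>\<in>l2 L. l2inner L (T \<xi>) \<eta> = l2inner L \<xi> (S \<eta>))" using S rel by blast
  fix S' assume h: "S' \<in> Bop L \<and> (\<forall>\<xi>\<in>l2 L. \<forall>\<eta>\<in>l2 L. l2inner L (T \<xi>) \<eta> = l2inner L \<xi> (S' \<eta>))"
  show "S' = S"
  proof (rule ext)
    fix \<eta>
    show "S' \<eta> = S \<eta>"
    proof (cases "\<eta> \<in> l2 L")
      case False then show ?thesis using h S Bop_out[of S L \<eta>] Bop_out[of S' L \<eta>] by simp
    next
      case True
      show ?thesis
      proof (rule ext)
        fix w show "S' \<eta> w = S \<eta> w"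
        proof (cases "w \<in> L")
          case False then show ?thesis using Bop_l2[OF S True] Bop_l2[of S' L \<eta>] h True
            by (simp add: l2_zero_outside)
        next
          case wL: True
          have "S' \<eta> w = l2inner L (bv w) (S' \<eta>)" by (simp add: l2inner_bv[OF wL])
          also have "\<dots> = l2inner L (T (bv w)) \<eta>" using h True bv_l2(1)[OF wL] by simp
          also have "\<dots> = l2inner L (bv w) (S \<eta>)" using rel True bv_l2(1)[OF wL] by simp
          also have "\<dots> = S \<eta> w" by (simp add: l2inner_bv[OF wL])
          finally show ?thesis .
        qed
      qed
    qed
  qed
qed

lemma adj_mop: assumes "bnd L c" shows "adj L (mop L c) = mop L (\<lambda>w. cnj (c w))"
proof (rule adj_unique)
  show "mop L (\<lambda>w. cnj (c w)) \<in> Bop L" by (rule mop_Bop[OF bnd_cnj[OF assms]])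
  show "\<forall>\<xi>\<in>l2 L. \<forall>\<eta>\<in>l2 L. l2inner L (mop L c \<xi>) \<eta> = l2inner L \<xi> (mop L (\<lambda>w. cnj (c w)) \<eta>)"
    by (auto simp: mop_def l2inner_def intro!: infsum_cong)
qed

lemma Iop_mop: "Iop L = mop L (\<lambda>_. 1)"
  by (auto simp: Iop_def mop_def fun_eq_iff)

lemma Qempty_mop: "Qempty L = mop L (\<lambda>w. if w = tempty then 1 else 0)"
  unfolding Qempty_def mop_def by (intro ext) auto

lemma mop_eq_iff: assumes "mop L c = mop L c'" "w \<in> L" shows "c w = c' w"
  using mop_bv[OF assms(2), of c] mop_bv[OF assms(2), of c'] assms(1) by simp

lemma mop_zero_iff: assumes "mop L c = 0" "w \<in> L" shows "c w = 0"
proof -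
  have "mop L c = mop L (\<lambda>_. 0)" using assms(1) by (auto simp: mop_def fun_eq_iff)
  thus ?thesis using mop_eq_iff assms(2) by fastforce
qed



lemma tcat_apply[simp]: "(\<mu> \<star> \<nu>) i = \<mu> i @ \<nu> i" by (simp add: tcat_def)
lemma tcat_assoc: "\<alpha> \<star> \<beta> \<star> \<gamma> = \<alpha> \<star> (\<beta> \<star> \<gamma>)" by (simp add: tcat_def)
lemma tcat_empty_left[simp]: "tempty \<star> x = x" by (simp add: tcat_def tempty_def)
lemma tcat_empty_right[simp]: "x \<star> tempty = x" by (simp add: tcat_def tempty_def)
lemma tempty_apply[simp]: "tempty i = []" by (simp add: tempty_def)

locale fl =
  fixes d N :: nat and L :: "tup set"
  assumes FL: "factorial_language d N L"
begin

lemma sub: "\<alpha> \<star> \<nu> \<star> \<beta> \<in> L \<Longrightarrow> \<nu> \<in> L"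
  using FL unfolding factorial_language_def by blast

lemma left: "\<mu> \<star> w \<in> L \<Longrightarrow> \<mu> \<in> L"
  using sub[of tempty \<mu> w] by simp

lemma right: "\<mu> \<star> w \<in> L \<Longrightarrow> w \<in> L"
  using sub[of \<mu> w tempty] by simp

lemma letters: "w \<in> L \<Longrightarrow> set (w i) \<subseteq> {1..d}"
  using FL by (auto simp: factorial_language_def)

lemma outside: "w \<in> L \<Longrightarrow> i \<notin> {1..N} \<Longrightarrow> w i = []"
  using FL by (auto simp: factorial_language_def)

lemma has_delta: "i \<in> {1..N} \<Longrightarrow> \<exists>k\<in>{1..d}. delta i k \<in> L"
  using FL by (auto simp: factorial_language_def)

lemma tempty_in: "N \<ge> 1 \<Longrightarrow> tempty \<in> L"
  using has_delta[of 1] right[of "delta 1 _" tempty] by force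

definition dropt :: "tup \<Rightarrow> tup \<Rightarrow> tup" where
  "dropt \<mu> v = (\<lambda>i. drop (length (\<mu> i)) (v i))"

lemma dropt_tcat[simp]: "dropt \<mu> (\<mu> \<star> w) = w"
  by (simp add: dropt_def)

lemma prefix_tcat: assumes "\<forall>i. prefix (\<mu> i) (v i)" shows "\<mu> \<star> dropt \<mu> v = v"
proof (rule ext)
  fix i
  obtain zs where "v i = \<mu> i @ zs" using assms prefix_def by metis
  thus "(\<mu> \<star> dropt \<mu> v) i = v i" by (simp add: dropt_def)
qed

lemma prefix_tcat2: "\<forall>i. prefix (\<mu> i) ((\<mu> \<star> w) i)"
  by simp

lemma Tm_at: "\<xi> \<in> l2 L \<Longrightarrow> \<mu> \<star> w \<in> L \<Longrightarrow> Tm L \<mu> \<xi> (\<mu> \<star> w) = \<xi> w"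
  by (simp add: Tm_def)

lemma Tm_zero: "v \<notin> (\<lambda>w. \<mu> \<star> w) ` {w \<in> L. \<mu> \<star> w \<in> L} \<Longrightarrow> Tm L \<mu> \<xi> v = 0"
  unfolding Tm_def using prefix_tcat right by (auto simp: image_iff) (metis)

lemma inj_tcat: "inj (\<lambda>w. \<mu> \<star> w)"
  by (rule injI) (metis dropt_tcat)

lemma img_sub: "(\<lambda>w. \<mu> \<star> w) ` {w \<in> L. \<mu> \<star> w \<in> L} \<subseteq> L" by auto

lemma infsum_img:
  fixes f :: "tup \<Rightarrow> 'b::{comm_monoid_add, t2_space}"
  assumes "\<And>v. v \<notin> (\<lambda>w. \<mu> \<star> w) ` {w \<in> L. \<mu> \<star> w \<in> L} \<Longrightarrow> f v = 0"
  shows "infsum f L = infsum (\<lambda>w. f (\<mu> \<star> w)) {w \<in> L. \<mu> \<star> w \<in> L}"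
proof -
  have "infsum f L = infsum f ((\<lambda>w. \<mu> \<star> w) ` {w \<in> L. \<mu> \<star> w \<in> L})"
    by (rule infsum_cong_neutral) (use assms in auto)
  also have "\<dots> = infsum (\<lambda>w. f (\<mu> \<star> w)) {w \<in> L. \<mu> \<star> w \<in> L}"
    using infsum_reindex[OF inj_on_subset[OF inj_tcat subset_UNIV]] by (simp add: comp_def)
  finally show ?thesis .
qed

lemma summable_img:
  fixes f :: "tup \<Rightarrow> 'b::{comm_monoid_add, t2_space}"
  assumes "\<And>v. v \<notin> (\<lambda>w. \<mu> \<star> w) ` {w \<in> L. \<mu> \<star> w \<in> L} \<Longrightarrow> f v = 0"
  shows "f summable_on L \<longleftrightarrow> (\<lambda>w. f (\<mu> \<star> w)) summable_on {w \<in> L. \<mu> \<star> w \<in> L}"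
proof -
  have "f summable_on L \<longleftrightarrow> f summable_on ((\<lambda>w. \<mu> \<star> w) ` {w \<in> L. \<mu> \<star> w \<in> L})"
    by (rule summable_on_cong_neutral) (use assms in auto)
  also have "\<dots> \<longleftrightarrow> (\<lambda>w. f (\<mu> \<star> w)) summable_on {w \<in> L. \<mu> \<star> w \<in> L}"
    using summable_on_reindex[OF inj_on_subset[OF inj_tcat subset_UNIV]] by (simp add: comp_def)
  finally show ?thesis .
qed

lemma sq_summ: "\<xi> \<in> l2 L \<Longrightarrow> (\<lambda>w. (cmod (\<xi> w))\<^sup>2) summable_on L"
  by (simp add: l2_def)

lemma sq_mono:
  assumes "\<xi> \<in> l2 L" "A \<subseteq> L"
  shows "(\<lambda>w. (cmod (\<xi> w))\<^sup>2) summable_on A" "infsum (\<lambda>w. (cmod (\<xi> w))\<^sup>2) A \<le> infsum (\<lambda>w. (cmod (\<xi> w))\<^sup>2) L"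
proof -
  show s: "(\<lambda>w. (cmod (\<xi> w))\<^sup>2) summable_on A"
    by (rule summable_on_subset_banach[OF sq_summ[OF assms(1)] assms(2)])
  show "infsum (\<lambda>w. (cmod (\<xi> w))\<^sup>2) A \<le> infsum (\<lambda>w. (cmod (\<xi> w))\<^sup>2) L"
    by (rule infsum_mono2[OF s sq_summ[OF assms(1)] assms(2)]) auto
qed

lemma Tm_l2: assumes x: "\<xi> \<in> l2 L" shows "Tm L \<mu> \<xi> \<in> l2 L" and "l2norm L (Tm L \<mu> \<xi>) \<le> 1 * l2norm L \<xi>"
proof -
  let ?A = "{w \<in> L. \<mu> \<star> w \<in> L}"
  have z: "\<And>v. v \<notin> (\<lambda>w. \<mu> \<star> w) ` ?A \<Longrightarrow> (cmod (Tm L \<mu> \<xi> v))\<^sup>2 = 0"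
    by (subst Tm_zero) simp_all
  have e: "\<And>w. w \<in> ?A \<Longrightarrow> (cmod (Tm L \<mu> \<xi> (\<mu> \<star> w)))\<^sup>2 = (cmod (\<xi> w))\<^sup>2"
    by (subst Tm_at[OF x]) simp_all
  have sA: "(\<lambda>w. (cmod (\<xi> w))\<^sup>2) summable_on ?A" by (rule sq_mono(1)[OF x]) blast
  have "(\<lambda>w. (cmod (Tm L \<mu> \<xi> (\<mu> \<star> w)))\<^sup>2) summable_on ?A"
    using sA by (subst summable_on_cong[OF e])
  hence s: "(\<lambda>v. (cmod (Tm L \<mu> \<xi> v))\<^sup>2) summable_on L" by (subst summable_img[OF z])
  have "\<forall>w. w \<notin> L \<longrightarrow> Tm L \<mu> \<xi> w = 0" by (simp add: Tm_def)
  thus "Tm L \<mu> \<xi> \<in> l2 L" using s by (simp add: l2_def)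
  have "infsum (\<lambda>v. (cmod (Tm L \<mu> \<xi> v))\<^sup>2) L = infsum (\<lambda>w. (cmod (Tm L \<mu> \<xi> (\<mu> \<star> w)))\<^sup>2) ?A"
    by (rule infsum_img[OF z])
  also have "\<dots> = infsum (\<lambda>w. (cmod (\<xi> w))\<^sup>2) ?A" by (rule infsum_cong[OF e])
  also have "\<dots> \<le> infsum (\<lambda>w. (cmod (\<xi> w))\<^sup>2) L" by (rule sq_mono(2)[OF x]) blast
  finally show "l2norm L (Tm L \<mu> \<xi>) \<le> 1 * l2norm L \<xi>" unfolding l2norm_def by simp
qed

lemma Tm_Bop: "Tm L \<mu> \<in> Bop L"
proof -
  have lin: "Tm L \<mu> (\<xi> + \<eta>) = Tm L \<mu> \<xi> + Tm L \<mu> \<eta> \<and> Tm L \<mu> (vsc c \<xi>) = vsc c (Tm L \<mu> \<xi>)"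
    if "\<xi> \<in> l2 L" "\<eta> \<in> l2 L" for \<xi> \<eta> c
  proof -
    have "\<xi> + \<eta> \<in> l2 L" "vsc c \<xi> \<in> l2 L" using l2_add(1) l2_scale(1) that by auto
    thus ?thesis using that unfolding Tm_def vsc_def by (intro conjI ext) simp_all
  qed
  have out: "Tm L \<mu> \<xi> = 0" if "\<xi> \<notin> l2 L" for \<xi> using that by (simp add: Tm_def)
  show ?thesis unfolding Bop_def using lin Tm_l2 out by blast
qed

definition Sm :: "tup \<Rightarrow> op" where
  "Sm \<mu> = (\<lambda>\<eta>. if \<eta> \<in> l2 L then (\<lambda>w. if w \<in> L \<and> \<mu> \<star> w \<in> L then \<eta> (\<mu> \<star> w) else 0) else 0)"

lemma Sm_l2: assumes x: "\<eta> \<in> l2 L" shows "Sm \<mu> \<eta> \<in> l2 L" and "l2norm L (Sm \<mu> \<eta>) \<le> 1 * l2norm L \<eta>"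
proof -
  let ?A = "{w \<in> L. \<mu> \<star> w \<in> L}"
  have eL: "infsum (\<lambda>w. (cmod (Sm \<mu> \<eta> w))\<^sup>2) L = infsum (\<lambda>w. (cmod (\<eta> (\<mu> \<star> w)))\<^sup>2) ?A"
    by (rule infsum_cong_neutral) (use x in \<open>auto simp: Sm_def\<close>)
  have sL: "(\<lambda>w. (cmod (Sm \<mu> \<eta> w))\<^sup>2) summable_on L \<longleftrightarrow> (\<lambda>w. (cmod (\<eta> (\<mu> \<star> w)))\<^sup>2) summable_on ?A"
    by (rule summable_on_cong_neutral) (use x in \<open>auto simp: Sm_def\<close>)
  have sub: "(\<lambda>w. \<mu> \<star> w) ` ?A \<subseteq> L" by auto
  have inj: "inj_on (\<lambda>w. \<mu> \<star> w) ?A" by (rule inj_on_subset[OF inj_tcat]) simp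
  have r1: "(\<lambda>w. (cmod (\<eta> (\<mu> \<star> w)))\<^sup>2) summable_on ?A"
    using sq_mono(1)[OF x sub] summable_on_reindex[OF inj, of "\<lambda>v. (cmod (\<eta> v))\<^sup>2"]
    by (simp add: comp_def)
  have "\<forall>w. w \<notin> L \<longrightarrow> Sm \<mu> \<eta> w = 0" by (simp add: Sm_def)
  thus "Sm \<mu> \<eta> \<in> l2 L" using sL r1 by (simp add: l2_def)
  have "infsum (\<lambda>w. (cmod (\<eta> (\<mu> \<star> w)))\<^sup>2) ?A = infsum (\<lambda>v. (cmod (\<eta> v))\<^sup>2) ((\<lambda>w. \<mu> \<star> w) ` ?A)"
    using infsum_reindex[OF inj, of "\<lambda>v. (cmod (\<eta> v))\<^sup>2"] by (simp add: comp_def)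
  also have "\<dots> \<le> infsum (\<lambda>v. (cmod (\<eta> v))\<^sup>2) L" by (rule sq_mono(2)[OF x sub])
  finally show "l2norm L (Sm \<mu> \<eta>) \<le> 1 * l2norm L \<eta>" unfolding l2norm_def eL by simp
qed

lemma Sm_Bop: "Sm \<mu> \<in> Bop L"
proof -
  have lin: "Sm \<mu> (\<xi> + \<eta>) = Sm \<mu> \<xi> + Sm \<mu> \<eta> \<and> Sm \<mu> (vsc c \<xi>) = vsc c (Sm \<mu> \<xi>)"
    if "\<xi> \<in> l2 L" "\<eta> \<in> l2 L" for \<xi> \<eta> c
  proof -
    have "\<xi> + \<eta> \<in> l2 L" "vsc c \<xi> \<in> l2 L" using l2_add(1) l2_scale(1) that by auto
    thus ?thesis using that unfolding Sm_def vsc_def by (intro conjI ext) simp_all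
  qed
  have out: "Sm \<mu> \<xi> = 0" if "\<xi> \<notin> l2 L" for \<xi> using that by (simp add: Sm_def)
  show ?thesis unfolding Bop_def using lin Sm_l2 out by blast
qed

lemma adj_Tm: "adj L (Tm L \<mu>) = Sm \<mu>"
proof (rule adj_unique[OF Sm_Bop], intro ballI)
  fix \<xi> \<eta> assume x: "\<xi> \<in> l2 L" and y: "\<eta> \<in> l2 L"
  let ?A = "{w \<in> L. \<mu> \<star> w \<in> L}"
  have "l2inner L (Tm L \<mu> \<xi>) \<eta> = infsum (\<lambda>w. cnj (Tm L \<mu> \<xi> (\<mu> \<star> w)) * \<eta> (\<mu> \<star> w)) ?A"
    unfolding l2inner_def by (rule infsum_img) (simp add: Tm_zero)
  also have "\<dots> = infsum (\<lambda>w. cnj (\<xi> w) * Sm \<mu> \<eta> w) ?A"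
    by (rule infsum_cong) (use x y in \<open>auto simp: Tm_at Sm_def\<close>)
  also have "\<dots> = l2inner L \<xi> (Sm \<mu> \<eta>)"
    unfolding l2inner_def by (rule infsum_cong_neutral) (use y in \<open>auto simp: Sm_def\<close>)
  finally show "l2inner L (Tm L \<mu> \<xi>) \<eta> = l2inner L \<xi> (Sm \<mu> \<eta>)" .
qed

lemma gen_mop: "adj L (Tm L \<mu>) \<circ> Tm L \<mu> = mop L (\<lambda>w. if \<mu> \<star> w \<in> L then 1 else 0)"
proof (rule ext)
  fix \<xi>
  show "(adj L (Tm L \<mu>) \<circ> Tm L \<mu>) \<xi> = mop L (\<lambda>w. if \<mu> \<star> w \<in> L then 1 else 0) \<xi>"
  proof (cases "\<xi> \<in> l2 L")
    case True
    then show ?thesis using Tm_l2(1)[OF True, of \<mu>]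
      by (auto simp: adj_Tm Sm_def mop_def Tm_at fun_eq_iff l2_zero_outside)
  next
    case False
    then show ?thesis unfolding comp_def adj_Tm by (simp add: Sm_def mop_def Tm_def fun_eq_iff)
  qed
qed

lemma TS_mop: "Tm L \<mu> \<circ> adj L (Tm L \<mu>) = mop L (\<lambda>v. if \<forall>i. prefix (\<mu> i) (v i) then 1 else 0)"
proof (rule ext)
  fix \<eta>
  show "(Tm L \<mu> \<circ> adj L (Tm L \<mu>)) \<eta> = mop L (\<lambda>v. if \<forall>i. prefix (\<mu> i) (v i) then 1 else 0) \<eta>"
  proof (cases "\<eta> \<in> l2 L")
    case True
    have "Tm L \<mu> (Sm \<mu> \<eta>) v = (if \<forall>i. prefix (\<mu> i) (v i) then 1 else 0) * \<eta> v" for v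
    proof (cases "v \<in> L \<and> (\<forall>i. prefix (\<mu> i) (v i))")
      case c: True
      have "\<mu> \<star> dropt \<mu> v = v" using prefix_tcat c by blast
      hence "dropt \<mu> v \<in> L" using c right by metis
      then show ?thesis using c Sm_l2(1)[OF True] True \<open>\<mu> \<star> dropt \<mu> v = v\<close>
        by (simp add: Tm_def Sm_def dropt_def[symmetric])
    next
      case False
      then show ?thesis using Sm_l2(1)[OF True] True l2_zero_outside[OF True, of v] by (auto simp: Tm_def)
    qed
    then show ?thesis using True by (simp add: adj_Tm mop_def fun_eq_iff)
  next
    case False
    then show ?thesis unfolding comp_def adj_Tm by (simp add: Sm_def mop_def Tm_def fun_eq_iff)
  qed
qed

end


lemma mop_sum: "finite K \<Longrightarrow> (\<Sum>k\<in>K. mop L (c k)) = mop L (\<lambda>w. \<Sum>k\<in>K. c k w)"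
proof (induction K rule: finite_induct)
  case empty
  then show ?case by (auto simp: mop_def fun_eq_iff)
next
  case (insert x F)
  then show ?case by (simp add: mop_plus)
qed

lemma mop_minus: "mop L c - mop L c' = mop L (\<lambda>w. c w - c' w)"
  by (auto simp: mop_def fun_eq_iff algebra_simps)

lemma prefix_delta: "(\<forall>j. prefix (delta i k j) (v j)) \<longleftrightarrow> (v i \<noteq> [] \<and> hd (v i) = k)"
proof -
  have "prefix [k] xs \<longleftrightarrow> xs \<noteq> [] \<and> hd xs = k" for xs by (cases xs) auto
  thus ?thesis unfolding delta_def by (metis Nil_prefix)
qed

context fl begin

lemma Pi_mop: "Pi L d i = mop L (\<lambda>v. if v i \<noteq> [] then 1 else 0)"
proof -
  have "Pi L d i = (\<Sum>k\<in>{1..d}. mop L (\<lambda>v. if v i \<noteq> [] \<and> hd (v i) = k then 1 else 0))"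
    unfolding Pi_def TS_mop prefix_delta ..
  also have "\<dots> = mop L (\<lambda>v. \<Sum>k\<in>{1..d}. if v i \<noteq> [] \<and> hd (v i) = k then 1 else 0)"
    by (rule mop_sum) simp
  also have "\<dots> = mop L (\<lambda>v. if v i \<noteq> [] then 1 else 0)"
  proof (rule mop_cong)
    fix v assume v: "v \<in> L"
    show "(\<Sum>k\<in>{1..d}. if v i \<noteq> [] \<and> hd (v i) = k then 1 else 0) = (if v i \<noteq> [] then 1 else (0::complex))"
    proof (cases "v i = []")
      case True then show ?thesis by simp
    next
      case False
      hence "hd (v i) \<in> {1..d}" using letters[OF v, of i] hd_in_set by blast
      then show ?thesis using False by (simp add: sum.delta')
    qed
  qed
  finally show ?thesis .
qed

lemma IPi_mop: "Iop L - Pi L d i = mop L (\<lambda>v. if v i = [] then 1 else 0)"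
  unfolding Iop_mop Pi_mop mop_minus by (rule mop_cong) simp

lemma foldr_mop:
  assumes F: "F = (\<lambda>i acc. (Iop L - Pi L d i) \<circ> acc)"
  shows "foldr F xs (Iop L) = mop L (\<lambda>v. if \<forall>i\<in>set xs. v i = [] then 1 else 0)"
proof (induction xs)
  case Nil
  then show ?case by (simp add: Iop_mop)
next
  case (Cons a xs)
  have "foldr F (a # xs) (Iop L) = F a (foldr F xs (Iop L))" by simp
  also have "\<dots> = F a (mop L (\<lambda>v. if \<forall>i\<in>set xs. v i = [] then 1 else 0))" by (simp only: Cons.IH)
  also have "\<dots> = mop L (\<lambda>v. if v a = [] then 1 else 0) \<circ> mop L (\<lambda>v. if \<forall>i\<in>set xs. v i = [] then 1 else 0)"
    by (simp only: F IPi_mop)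
  also have "\<dots> = mop L (\<lambda>v. (if v a = [] then 1 else 0) * (if \<forall>i\<in>set xs. v i = [] then 1 else 0))"
    by (rule mop_comp) (rule bnd_ind, simp)
  also have "\<dots> = mop L (\<lambda>v. if \<forall>i\<in>set (a # xs). v i = [] then 1 else 0)"
    by (rule mop_cong) simp
  finally show ?case .
qed

lemma QG_mop: "finite G \<Longrightarrow> QG L d G = mop L (\<lambda>v. if \<forall>i\<in>G. v i = [] then 1 else 0)"
  unfolding QG_def foldr_mop[OF refl] by simp

end

lemma Aalg_prop:
  assumes "a \<in> Aalg L"
    and "{adj L (Tm L \<mu>) \<circ> Tm L \<mu> | \<mu>. \<mu> \<in> L} \<subseteq> S" "S \<subseteq> Bop L"
    "\<forall>a\<in>S. \<forall>b\<in>S. a + b \<in> S \<and> a \<circ> b \<in> S" "\<forall>a\<in>S. \<forall>c. osc c a \<in> S"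
    "\<forall>a\<in>S. adj L a \<in> S" "norm_closed L S"
  shows "a \<in> S"
  using assms(1) unfolding Aalg_def cstar_def by (rule InterD) (use assms(2-) in simp)

lemma Aalg_closed:
  assumes "a \<in> Aalg L" "b \<in> Aalg L"
  shows "a \<circ> b \<in> Aalg L" "osc c a \<in> Aalg L"
proof -
  have "a \<circ> b \<in> S \<and> osc c a \<in> S" if S: "S \<in> {S. {adj L (Tm L \<mu>) \<circ> Tm L \<mu> | \<mu>. \<mu> \<in> L} \<subseteq> S \<and> S \<subseteq> Bop L \<and>
      (\<forall>a\<in>S. \<forall>b\<in>S. a + b \<in> S \<and> a \<circ> b \<in> S) \<and> (\<forall>a\<in>S. \<forall>c. osc c a \<in> S) \<and>
      (\<forall>a\<in>S. adj L a \<in> S) \<and> norm_closed L S}" for S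
  proof -
    have "a \<in> S" "b \<in> S" using assms S unfolding Aalg_def cstar_def by (meson InterD)+
    thus ?thesis using S by simp
  qed
  thus "a \<circ> b \<in> Aalg L" "osc c a \<in> Aalg L" unfolding Aalg_def cstar_def by auto
qed

lemma Aalg_gen: "\<mu> \<in> L \<Longrightarrow> adj L (Tm L \<mu>) \<circ> Tm L \<mu> \<in> Aalg L"
  unfolding Aalg_def cstar_def by blast



lemma sum_bound:
  assumes u: "u \<in> l2 L" and v: "v \<in> l2 L" and "C1 \<ge> 0" "C2 \<ge> 0" "n \<ge> 0"
    and hu: "l2norm L u \<le> C1 * n" and hv: "l2norm L v \<le> C2 * n"
  shows "l2norm L (u + v) \<le> (2 * C1 + 2 * C2) * n"
proof -
  have "(l2norm L (u + v))\<^sup>2 \<le> 2 * (l2norm L u)\<^sup>2 + 2 * (l2norm L v)\<^sup>2"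
    by (rule l2_add(2)[OF u v])
  also have "\<dots> \<le> 2 * (C1 * n)\<^sup>2 + 2 * (C2 * n)\<^sup>2"
  proof -
    have a: "(l2norm L u)\<^sup>2 \<le> (C1 * n)\<^sup>2" using hu by (simp add: l2norm_nonneg power_mono)
    have b: "(l2norm L v)\<^sup>2 \<le> (C2 * n)\<^sup>2" using hv by (simp add: l2norm_nonneg power_mono)
    show ?thesis using a b by linarith
  qed
  also have "\<dots> \<le> ((2 * C1 + 2 * C2) * n)\<^sup>2"
  proof -
    have "0 \<le> C1 * C1 * (n * n)" "0 \<le> C2 * C2 * (n * n)" "0 \<le> C1 * C2 * (n * n)"
      using assms(3-5) by auto
    thus ?thesis unfolding power2_eq_square by (simp add: algebra_simps)
  qed
  finally have h: "(l2norm L (u + v))\<^sup>2 \<le> ((2 * C1 + 2 * C2) * n)\<^sup>2" .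
  show ?thesis
    by (rule power2_le_imp_le[OF h]) (use assms(3-5) in simp)
qed

lemma Bop_comp: assumes a: "a \<in> Bop L" and b: "b \<in> Bop L" shows "a \<circ> b \<in> Bop L"
proof -
  obtain C1 where C1: "C1 \<ge> 0" "\<forall>\<xi>\<in>l2 L. l2norm L (a \<xi>) \<le> C1 * l2norm L \<xi>" using Bop_bound[OF a] by blast
  obtain C2 where C2: "C2 \<ge> 0" "\<forall>\<xi>\<in>l2 L. l2norm L (b \<xi>) \<le> C2 * l2norm L \<xi>" using Bop_bound[OF b] by blast
  have out: "(a \<circ> b) \<xi> = 0" if "\<xi> \<notin> l2 L" for \<xi> using that Bop_out[OF b] Bop_zero[OF a] by simp
  have l: "(a \<circ> b) \<xi> \<in> l2 L" if "\<xi> \<in> l2 L" for \<xi> using that Bop_l2[OF a Bop_l2[OF b]] by simp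
  have lin: "(a \<circ> b) (\<xi> + \<eta>) = (a \<circ> b) \<xi> + (a \<circ> b) \<eta> \<and> (a \<circ> b) (vsc c \<xi>) = vsc c ((a \<circ> b) \<xi>)"
    if "\<xi> \<in> l2 L" "\<eta> \<in> l2 L" for \<xi> \<eta> c
    using that Bop_add[OF b] Bop_vsc[OF b] Bop_add[OF a Bop_l2[OF b] Bop_l2[OF b]] Bop_vsc[OF a Bop_l2[OF b]] by simp
  have bd: "l2norm L ((a \<circ> b) \<xi>) \<le> (C1 * C2) * l2norm L \<xi>" if "\<xi> \<in> l2 L" for \<xi>
  proof -
    have "l2norm L (a (b \<xi>)) \<le> C1 * l2norm L (b \<xi>)" using C1(2) Bop_l2[OF b that] by blast
    also have "\<dots> \<le> C1 * (C2 * l2norm L \<xi>)" using C2(2) that C1(1) by (simp add: mult_left_mono)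
    finally show ?thesis by (simp add: mult.assoc)
  qed
  show ?thesis unfolding Bop_def using out l lin bd by blast
qed

lemma Bop_plus: assumes a: "a \<in> Bop L" and b: "b \<in> Bop L" shows "a + b \<in> Bop L"
proof -
  obtain C1 where C1: "C1 \<ge> 0" "\<forall>\<xi>\<in>l2 L. l2norm L (a \<xi>) \<le> C1 * l2norm L \<xi>" using Bop_bound[OF a] by blast
  obtain C2 where C2: "C2 \<ge> 0" "\<forall>\<xi>\<in>l2 L. l2norm L (b \<xi>) \<le> C2 * l2norm L \<xi>" using Bop_bound[OF b] by blast
  have out: "(a + b) \<xi> = 0" if "\<xi> \<notin> l2 L" for \<xi> using that Bop_out[OF b] Bop_out[OF a] by simp
  have l: "(a + b) \<xi> \<in> l2 L" if "\<xi> \<in> l2 L" for \<xi> using l2_add(1)[OF Bop_l2[OF a that] Bop_l2[OF b that]] by simp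
  have lin: "(a + b) (\<xi> + \<eta>) = (a + b) \<xi> + (a + b) \<eta> \<and> (a + b) (vsc c \<xi>) = vsc c ((a + b) \<xi>)"
    if "\<xi> \<in> l2 L" "\<eta> \<in> l2 L" for \<xi> \<eta> c
    using that Bop_add[OF b] Bop_vsc[OF b] Bop_add[OF a] Bop_vsc[OF a]
    by (simp add: algebra_simps vsc_def fun_eq_iff)
  have bd: "l2norm L ((a + b) \<xi>) \<le> (2 * C1 + 2 * C2) * l2norm L \<xi>" if "\<xi> \<in> l2 L" for \<xi>
    apply (subst plus_fun_apply)
    by (rule sum_bound[OF Bop_l2[OF a that] Bop_l2[OF b that] C1(1) C2(1) l2norm_nonneg])
       (use C1 C2 that in blast)+
  show ?thesis unfolding Bop_def using out l lin bd by blast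
qed

lemma Bop_osc: assumes a: "a \<in> Bop L" shows "osc c a \<in> Bop L"
proof -
  obtain C1 where C1: "C1 \<ge> 0" "\<forall>\<xi>\<in>l2 L. l2norm L (a \<xi>) \<le> C1 * l2norm L \<xi>" using Bop_bound[OF a] by blast
  have out: "osc c a \<xi> = 0" if "\<xi> \<notin> l2 L" for \<xi> using that Bop_out[OF a] by (simp add: osc_def vsc_def fun_eq_iff)
  have l: "osc c a \<xi> \<in> l2 L" if "\<xi> \<in> l2 L" for \<xi> unfolding osc_def by (rule l2_scale(1)[OF Bop_l2[OF a that]])
  have lin: "osc c a (\<xi> + \<eta>) = osc c a \<xi> + osc c a \<eta> \<and> osc c a (vsc k \<xi>) = vsc k (osc c a \<xi>)"
    if "\<xi> \<in> l2 L" "\<eta> \<in> l2 L" for \<xi> \<eta> k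
    using that Bop_add[OF a] Bop_vsc[OF a]
    by (simp add: algebra_simps vsc_def osc_def fun_eq_iff)
  have bd: "l2norm L (osc c a \<xi>) \<le> (cmod c * C1) * l2norm L \<xi>" if "\<xi> \<in> l2 L" for \<xi>
  proof -
    have "l2norm L (osc c a \<xi>) \<le> cmod c * l2norm L (a \<xi>)" unfolding osc_def by (rule l2_scale(2)[OF Bop_l2[OF a that]])
    also have "\<dots> \<le> cmod c * (C1 * l2norm L \<xi>)" using C1(2) that by (simp add: mult_left_mono)
    finally show ?thesis by (simp add: mult.assoc)
  qed
  show ?thesis unfolding Bop_def using out l lin bd by blast
qed

lemma zero_Bop: "(0::op) \<in> Bop L"
proof -
  have z: "(0::op) \<xi> = 0" for \<xi> by simp
  have n: "l2norm L 0 = 0" by (simp add: l2norm_def)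
  show ?thesis unfolding Bop_def z using n l2norm_nonneg
    by (auto simp: vsc_def intro!: exI[of _ 0])
qed



definition DS :: "tup set \<Rightarrow> tup \<Rightarrow> tup \<Rightarrow> op set" where
  "DS L x y = {mop L c | c. bnd L c \<and> c x = c y}"

lemma DS_norm_closed: assumes x: "x \<in> L" and y: "y \<in> L" shows "norm_closed L (DS L x y)"
  unfolding norm_closed_def
proof (intro allI impI)
  fix f b assume hf: "\<forall>n. f n \<in> DS L x y" and hb: "b \<in> Bop L" and lim: "(\<lambda>n. opnorm L (f n - b)) \<longlonglongrightarrow> 0"
  have "\<forall>n. \<exists>c. f n = mop L c \<and> bnd L c \<and> c x = c y" using hf by (auto simp: DS_def)
  then obtain cs where cs: "\<And>n. f n = mop L (cs n) \<and> bnd L (cs n) \<and> cs n x = cs n y"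
    using choice[of "\<lambda>n c. f n = mop L c \<and> bnd L c \<and> c x = c y"] by blast
  have fB: "\<And>n. f n \<in> Bop L" using cs mop_Bop by metis
  define c where "c w = b (bv w) w" for w
  have conv: "(\<lambda>n. cs n w) \<longlonglongrightarrow> c w" if w: "w \<in> L" for w
  proof -
    have "(\<lambda>n. f n (bv w) w) \<longlonglongrightarrow> b (bv w) w" by (rule ptwise_lim[OF fB hb lim bv_l2(1)[OF w]])
    moreover have "f n (bv w) w = cs n w" for n using cs[of n] mop_bv[OF w] by simp
    ultimately show ?thesis unfolding c_def by simp
  qed
  have bc: "bnd L c"
  proof -
    obtain C where C: "C \<ge> 0" "\<forall>\<xi>\<in>l2 L. l2norm L (b \<xi>) \<le> C * l2norm L \<xi>" using Bop_bound[OF hb] by blast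
    have "cmod (c w) \<le> C" if w: "w \<in> L" for w
    proof -
      have "cmod (c w) \<le> l2norm L (b (bv w))" unfolding c_def by (rule l2_point[OF Bop_l2[OF hb bv_l2(1)[OF w]]])
      also have "\<dots> \<le> C * l2norm L (bv w)" using C(2) bv_l2(1)[OF w] by blast
      finally show ?thesis using bv_l2(2)[OF w] by simp
    qed
    thus ?thesis unfolding bnd_def by blast
  qed
  have cxy: "c x = c y"
  proof -
    have "(\<lambda>n. cs n x) \<longlonglongrightarrow> c y" using conv[OF y] cs by simp
    thus ?thesis using conv[OF x] LIMSEQ_unique by blast
  qed
  have beq: "b = mop L c"
  proof (rule ext)
    fix \<xi>
    show "b \<xi> = mop L c \<xi>"
    proof (cases "\<xi> \<in> l2 L")
      case False then show ?thesis using Bop_out[OF hb False] by (simp add: mop_def)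
    next
      case True
      show ?thesis
      proof (rule ext)
        fix w show "b \<xi> w = mop L c \<xi> w"
        proof (cases "w \<in> L")
          case False
          then show ?thesis using True l2_zero_outside[OF Bop_l2[OF hb True] False] l2_zero_outside[OF True False]
            by (simp add: mop_def)
        next
          case wL: True
          have l1: "(\<lambda>n. f n \<xi> w) \<longlonglongrightarrow> b \<xi> w" by (rule ptwise_lim[OF fB hb lim True])
          have "(\<lambda>n. cs n w * \<xi> w) \<longlonglongrightarrow> c w * \<xi> w" by (rule tendsto_mult[OF conv[OF wL] tendsto_const])
          moreover have "f n \<xi> w = cs n w * \<xi> w" for n using cs[of n] True by (simp add: mop_def)
          ultimately have "(\<lambda>n. f n \<xi> w) \<longlonglongrightarrow> c w * \<xi> w" by simp
          then show ?thesis using l1 LIMSEQ_unique True by (simp add: mop_def)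
        qed
      qed
    qed
  qed
  show "b \<in> DS L x y" unfolding DS_def using beq bc cxy by blast
qed

lemma Aalg_DS:
  assumes x: "x \<in> L" and y: "y \<in> L" and h: "\<forall>\<mu>\<in>L. \<mu> \<star> x \<in> L \<longleftrightarrow> \<mu> \<star> y \<in> L"
    and fl: "fl d N L" and a: "a \<in> Aalg L"
  shows "a \<in> DS L x y"
proof (rule Aalg_prop[OF a])
  show "{adj L (Tm L \<mu>) \<circ> Tm L \<mu> | \<mu>. \<mu> \<in> L} \<subseteq> DS L x y"
  proof
    fix g assume "g \<in> {adj L (Tm L \<mu>) \<circ> Tm L \<mu> | \<mu>. \<mu> \<in> L}"
    then obtain \<mu> where \<mu>: "\<mu> \<in> L" and g: "g = adj L (Tm L \<mu>) \<circ> Tm L \<mu>" by blast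
    have "g = mop L (\<lambda>w. if \<mu> \<star> w \<in> L then 1 else 0)" unfolding g by (rule fl.gen_mop[OF fl])
    moreover have "bnd L (\<lambda>w. if \<mu> \<star> w \<in> L then 1 else 0)" by (rule bnd_ind) simp
    moreover have "(\<lambda>w. if \<mu> \<star> w \<in> L then 1 else (0::complex)) x = (\<lambda>w. if \<mu> \<star> w \<in> L then 1 else 0) y"
      using h \<mu> by simp
    ultimately show "g \<in> DS L x y" unfolding DS_def by blast
  qed
  show "DS L x y \<subseteq> Bop L" unfolding DS_def using mop_Bop by blast
  show "\<forall>a\<in>DS L x y. \<forall>b\<in>DS L x y. a + b \<in> DS L x y \<and> a \<circ> b \<in> DS L x y"
  proof (intro ballI conjI)
    fix a b assume "a \<in> DS L x y" "b \<in> DS L x y"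
    then obtain c c' where a: "a = mop L c" "bnd L c" "c x = c y" and b: "b = mop L c'" "bnd L c'" "c' x = c' y"
      unfolding DS_def by blast
    show "a + b \<in> DS L x y" unfolding DS_def a b mop_plus using bnd_plus[OF a(2) b(2)] a(3) b(3) by auto
    show "a \<circ> b \<in> DS L x y" unfolding DS_def a b mop_comp[OF b(2)] using bnd_mult[OF a(2) b(2)] a(3) b(3) by auto
  qed
  show "\<forall>a\<in>DS L x y. \<forall>k. osc k a \<in> DS L x y"
  proof (intro ballI allI)
    fix a k assume "a \<in> DS L x y"
    then obtain c where a: "a = mop L c" "bnd L c" "c x = c y" unfolding DS_def by blast
    show "osc k a \<in> DS L x y" unfolding DS_def a osc_mop using bnd_scale[OF a(2)] a(3) by auto
  qed
  show "\<forall>a\<in>DS L x y. adj L a \<in> DS L x y"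
  proof (intro ballI)
    fix a assume "a \<in> DS L x y"
    then obtain c where a: "a = mop L c" "bnd L c" "c x = c y" unfolding DS_def by blast
    show "adj L a \<in> DS L x y" unfolding DS_def a adj_mop[OF a(2)] using bnd_cnj[OF a(2)] a(3) by auto
  qed
  show "norm_closed L (DS L x y)" by (rule DS_norm_closed[OF x y])
qed

lemma Aalg_mop:
  assumes "fl d N L" "tempty \<in> L" "a \<in> Aalg L"
  shows "\<exists>c. bnd L c \<and> a = mop L c"
  using Aalg_DS[OF assms(2) assms(2) _ assms(1) assms(3)] unfolding DS_def by auto

lemma Aalg_Bop:
  assumes "fl d N L" "tempty \<in> L" "a \<in> Aalg L"
  shows "a \<in> Bop L"
  using Aalg_mop[OF assms] mop_Bop by blast

lemma Iop_Aalg: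
  assumes "fl d N L" "tempty \<in> L"
  shows "Iop L \<in> Aalg L"
proof -
  have "adj L (Tm L tempty) \<circ> Tm L tempty \<in> Aalg L" by (rule Aalg_gen[OF assms(2)])
  also have "adj L (Tm L tempty) \<circ> Tm L tempty = mop L (\<lambda>w. if tempty \<star> w \<in> L then 1 else 0)"
    by (rule fl.gen_mop[OF assms(1)])
  also have "\<dots> = Iop L" unfolding Iop_mop by (rule mop_cong) simp
  finally show ?thesis .
qed

definition XS :: "tup set \<Rightarrow> nat \<Rightarrow> op set" where
  "XS L i = {T \<in> Bop L. \<forall>\<zeta> w. w i = [] \<longrightarrow> T \<zeta> w = 0}"

lemma Xi_XS:
  assumes fl: "fl d N L" and e: "tempty \<in> L" and t: "t \<in> Xi L d i"
  shows "t \<in> XS L i"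
proof -
  let ?G = "{Tm L (delta i k) \<circ> a | k a. k \<in> {1..d} \<and> a \<in> Aalg L \<and> delta i k \<in> L}"
  have G: "?G \<subseteq> XS L i"
  proof
    fix g assume "g \<in> ?G"
    then obtain k a where g: "g = Tm L (delta i k) \<circ> a" and a: "a \<in> Aalg L" by blast
    have "g \<in> Bop L" unfolding g by (rule Bop_comp[OF fl.Tm_Bop[OF fl] Aalg_Bop[OF fl e a]])
    moreover have "g \<zeta> w = 0" if "w i = []" for \<zeta> w
    proof -
      have nc: "(w \<in> L \<and> (\<forall>j. prefix (delta i k j) (w j))) = False" using that prefix_delta by blast
      show ?thesis unfolding g Tm_def comp_apply by simp (use that prefix_delta in blast)
    qed
    ultimately show "g \<in> XS L i" unfolding XS_def by blast
  qed
  have z: "0 \<in> XS L i" unfolding XS_def using zero_Bop[of L] by simp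
  have p: "\<forall>a\<in>XS L i. \<forall>b\<in>XS L i. a + b \<in> XS L i"
  proof (intro ballI)
    fix a b assume a: "a \<in> XS L i" and b: "b \<in> XS L i"
    have "a + b \<in> Bop L" using a b unfolding XS_def by (intro Bop_plus) auto
    moreover have "(a + b) \<zeta> w = 0" if "w i = []" for \<zeta> w using a b that unfolding XS_def by simp
    ultimately show "a + b \<in> XS L i" unfolding XS_def by blast
  qed
  have o: "\<forall>a\<in>XS L i. \<forall>c. osc c a \<in> XS L i"
  proof (intro ballI allI)
    fix a c assume a: "a \<in> XS L i"
    have "osc c a \<in> Bop L" using a unfolding XS_def by (intro Bop_osc) auto
    moreover have "osc c a \<zeta> w = 0" if "w i = []" for \<zeta> w using a that unfolding XS_def by (simp add: osc_def vsc_def)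
    ultimately show "osc c a \<in> XS L i" unfolding XS_def by blast
  qed
  have n: "norm_closed L (XS L i)"
    unfolding norm_closed_def
  proof (intro allI impI)
    fix f b assume hf: "\<forall>n. f n \<in> XS L i" and hb: "b \<in> Bop L" and lim: "(\<lambda>n. opnorm L (f n - b)) \<longlonglongrightarrow> 0"
    have fB: "f n \<in> Bop L" for n
    proof -
      have "f n \<in> XS L i" using hf by blast
      thus ?thesis unfolding XS_def by simp
    qed
    have "b \<zeta> w = 0" if w: "w i = []" for \<zeta> w
    proof (cases "\<zeta> \<in> l2 L")
      case False then show ?thesis using Bop_out[OF hb False] by simp
    next
      case True
      have l: "(\<lambda>n. f n \<zeta> w) \<longlonglongrightarrow> b \<zeta> w" by (rule ptwise_lim[OF fB hb lim True])
      have "f n \<zeta> w = 0" for n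
      proof -
        have "f n \<in> XS L i" using hf by blast
        thus ?thesis using w unfolding XS_def by simp
      qed
      hence "(\<lambda>n. f n \<zeta> w) = (\<lambda>n. 0)" by (rule ext)
      hence "(\<lambda>n. 0) \<longlonglongrightarrow> b \<zeta> w" using l by simp
      thus ?thesis using LIMSEQ_unique[OF _ tendsto_const] by metis
    qed
    thus "b \<in> XS L i" unfolding XS_def using hb by blast
  qed
  have s: "XS L i \<subseteq> Bop L" unfolding XS_def by blast
  show ?thesis using t unfolding Xi_def clspan_def
    by (rule InterD) (use G z p o n s in simp)
qed



locale fl2 = fl +
  assumes E: "tempty \<in> L"
begin

lemma Iop_A: "Iop L \<in> Aalg L" by (rule Iop_Aalg[OF fl_axioms E])

lemma A_mop: "a \<in> Aalg L \<Longrightarrow> \<exists>c. bnd L c \<and> a = mop L c"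
  by (rule Aalg_mop[OF fl_axioms E])

lemma w_empty: assumes "w \<in> L" "\<forall>i\<in>{1..N}. w i = []" shows "w = tempty"
proof (rule ext)
  fix i show "w i = tempty i" using assms outside[OF assms(1), of i] by (cases "i \<in> {1..N}") auto
qed

lemma nonempty_coord: assumes "w \<in> L" "w \<noteq> tempty" shows "\<exists>i\<in>{1..N}. w i \<noteq> []"
  using w_empty assms by blast

lemma dec:
  assumes w: "w \<in> L" and ne: "w i \<noteq> []"
  shows "\<exists>k w'. k \<in> {1..d} \<and> delta i k \<in> L \<and> w' \<in> L \<and> w = delta i k \<star> w'"
proof -
  define k where "k = hd (w i)"
  define w' where "w' = w(i := tl (w i))"
  have eq: "w = delta i k \<star> w'"
  proof (rule ext)
    fix j show "w j = (delta i k \<star> w') j"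
      using ne by (cases "j = i") (auto simp: delta_def w'_def k_def)
  qed
  have "k \<in> {1..d}" using letters[OF w, of i] ne unfolding k_def using hd_in_set by blast
  moreover have "delta i k \<in> L" using w eq left by metis
  moreover have "w' \<in> L" using w eq right by metis
  ultimately show ?thesis using eq by blast
qed

lemma Tm_bv: assumes "\<mu> \<star> w \<in> L" "w \<in> L" shows "Tm L \<mu> (bv w) = bv (\<mu> \<star> w)"
proof (rule ext)
  fix v
  show "Tm L \<mu> (bv w) v = bv (\<mu> \<star> w) v"
  proof (cases "v \<in> L \<and> (\<forall>i. prefix (\<mu> i) (v i))")
    case True
    have v: "v = \<mu> \<star> dropt \<mu> v" using prefix_tcat True by metis
    have "dropt \<mu> v = w \<longleftrightarrow> v = \<mu> \<star> w" using v by (metis dropt_tcat)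
    have "Tm L \<mu> (bv w) v = bv w (dropt \<mu> v)" unfolding Tm_def dropt_def using True bv_l2(1)[OF assms(2)] by simp
    then show ?thesis using \<open>dropt \<mu> v = w \<longleftrightarrow> v = \<mu> \<star> w\<close> by (simp add: bv_def)
  next
    case False
    have "v \<noteq> \<mu> \<star> w" using False assms(1) by auto
    hence "bv (\<mu> \<star> w) v = 0" by (simp add: bv_def)
    moreover have "Tm L \<mu> (bv w) v = 0" unfolding Tm_def using False by auto
    ultimately show ?thesis by simp
  qed
qed

lemma gen_Xi: "k \<in> {1..d} \<Longrightarrow> delta i k \<in> L \<Longrightarrow> b \<in> Aalg L \<Longrightarrow> Tm L (delta i k) \<circ> b \<in> Xi L d i"
  unfolding Xi_def clspan_def by blast

lemma K:
  assumes a: "a \<in> kerphi L d i" and c: "a = mop L c" and w: "w \<in> L" and ne: "w i \<noteq> []"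
  shows "c w = 0"
proof -
  obtain k w' where k: "k \<in> {1..d}" and dL: "delta i k \<in> L" and w': "w' \<in> L" and eq: "w = delta i k \<star> w'"
    using dec[OF w ne] by blast
  have g: "Tm L (delta i k) \<circ> Iop L \<in> Xi L d i" by (rule gen_Xi[OF k dL Iop_A])
  have "a \<circ> (Tm L (delta i k) \<circ> Iop L) = 0" using a g unfolding kerphi_def by blast
  hence "a (Tm L (delta i k) (Iop L (bv w'))) = 0" by (metis comp_apply zero_fun_apply)
  moreover have "Iop L (bv w') = bv w'" using bv_l2(1)[OF w'] by (simp add: Iop_def)
  moreover have "Tm L (delta i k) (bv w') = bv w" using Tm_bv[of "delta i k" w'] w w' eq by simp
  ultimately have "a (bv w) = 0" by simp
  hence "a (bv w) w = 0" by simp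
  thus ?thesis using mop_bv[OF w, of c] c by simp
qed

lemma kernel_I:
  assumes a: "a \<in> Aalg L" and c: "a = mop L c" and z: "\<forall>w\<in>L. w i \<noteq> [] \<longrightarrow> c w = 0"
  shows "a \<in> kerphi L d i"
proof -
  have "a \<circ> t = 0" if t: "t \<in> Xi L d i" for t
  proof (rule ext)
    fix \<zeta>
    have tX: "t \<in> XS L i" by (rule Xi_XS[OF fl_axioms E t])
    show "(a \<circ> t) \<zeta> = 0 \<zeta>"
    proof (cases "t \<zeta> \<in> l2 L")
      case False then show ?thesis unfolding c by (simp add: mop_def)
    next
      case True
      have "c w * t \<zeta> w = 0" for w
      proof (cases "w \<in> L")
        case False then show ?thesis using l2_zero_outside[OF True False] by simp
      next
        case wL: True
        show ?thesis
        proof (cases "w i = []")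
          case True then show ?thesis using tX unfolding XS_def by simp
        next
          case False then show ?thesis using z wL by simp
        qed
      qed
      then show ?thesis unfolding c using True by (simp add: mop_def fun_eq_iff)
    qed
  qed
  thus ?thesis unfolding kerphi_def using a by blast
qed

lemma zero_A: "0 \<in> Aalg L"
proof -
  have "osc 0 (Iop L) \<in> Aalg L" by (rule Aalg_closed(2)[OF Iop_A Iop_A])
  moreover have "osc 0 (Iop L) = 0" by (simp add: osc_def vsc_def fun_eq_iff)
  ultimately show ?thesis by simp
qed

lemma zero_ker: "0 \<in> kerphi L d i"
  unfolding kerphi_def using zero_A by (simp add: fun_eq_iff)

lemma ind_A: "finite K \<Longrightarrow> (\<forall>p\<in>K. m p \<in> L) \<Longrightarrow> mop L (\<lambda>w. if \<forall>p\<in>K. m p \<star> w \<in> L then 1 else 0) \<in> Aalg L"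
proof (induction K rule: finite_induct)
  case empty
  have "mop L (\<lambda>w. if \<forall>p\<in>{}. m p \<star> w \<in> L then 1 else 0) = Iop L" unfolding Iop_mop by simp
  then show ?case using Iop_A by simp
next
  case (insert x F)
  have g: "mop L (\<lambda>w. if m x \<star> w \<in> L then 1 else 0) \<in> Aalg L"
    using Aalg_gen[of "m x" L] gen_mop[of "m x"] insert.prems by simp
  have IH: "mop L (\<lambda>w. if \<forall>p\<in>F. m p \<star> w \<in> L then 1 else 0) \<in> Aalg L"
    by (rule insert.IH) (use insert.prems in simp)
  have "mop L (\<lambda>w. if m x \<star> w \<in> L then 1 else 0) \<circ> mop L (\<lambda>w. if \<forall>p\<in>F. m p \<star> w \<in> L then 1 else 0)
      = mop L (\<lambda>w. (if m x \<star> w \<in> L then 1 else 0) * (if \<forall>p\<in>F. m p \<star> w \<in> L then 1 else 0))"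
    by (rule mop_comp) (rule bnd_ind, simp)
  also have "\<dots> = mop L (\<lambda>w. if \<forall>p\<in>insert x F. m p \<star> w \<in> L then 1 else 0)"
    by (rule mop_cong) simp
  finally have e: "mop L (\<lambda>w. if m x \<star> w \<in> L then 1 else 0) \<circ> mop L (\<lambda>w. if \<forall>p\<in>F. m p \<star> w \<in> L then 1 else 0)
      = mop L (\<lambda>w. if \<forall>p\<in>insert x F. m p \<star> w \<in> L then 1 else 0)" .
  show ?case using Aalg_closed(1)[OF g IH] unfolding e .
qed

end



context fl2 begin

lemma q_bnd: "bnd L (\<lambda>v::tup. if \<forall>i\<in>G. v i = [] then 1 else 0)"
  by (rule bnd_ind) simp

lemma mop_zero: "mop L (\<lambda>_. 0) = 0"
  by (simp add: mop_def fun_eq_iff)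

lemma I_II:
  assumes F: "F \<subseteq> {1..N}" "F \<noteq> {}" and a: "a \<in> (\<Inter>i\<in>F. kerphi L d i)"
    and nz: "a \<circ> QG L d ({1..N} - F) \<noteq> 0"
  shows "\<exists>a\<in>Aalg L. a \<circ> QG L d ({1..N} - F) = Qempty L"
proof -
  let ?Fc = "{1..N} - F"
  define q :: "tup \<Rightarrow> complex" where "q = (\<lambda>v. if \<forall>i\<in>?Fc. v i = [] then 1 else (0::complex))"
  have QG: "QG L d ?Fc = mop L q" unfolding q_def by (rule QG_mop) simp
  obtain i0 where i0: "i0 \<in> F" using F(2) by blast
  have ak: "a \<in> kerphi L d i" if "i \<in> F" for i using a that by blast
  have aA: "a \<in> Aalg L" using ak[OF i0] unfolding kerphi_def by blast
  obtain c where bc: "bnd L c" and ac: "a = mop L c" using A_mop[OF aA] by blast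
  have aq: "a \<circ> QG L d ?Fc = mop L (\<lambda>w. c w * q w)" unfolding QG ac q_def by (rule mop_comp[OF q_bnd])
  have kz: "c w = 0" if "w \<in> L" "i \<in> F" "w i \<noteq> []" for w i by (rule K[OF ak[OF that(2)] ac that(1) that(3)])
  have "\<exists>w\<in>L. c w * q w \<noteq> 0"
  proof (rule ccontr)
    assume "\<not> ?thesis"
    hence "mop L (\<lambda>w. c w * q w) = mop L (\<lambda>_. 0)" by (intro mop_cong) blast
    thus False using nz aq mop_zero by simp
  qed
  then obtain w where wL: "w \<in> L" and cw: "c w \<noteq> 0" and qw: "q w \<noteq> 0" by auto
  have wFc: "\<forall>i\<in>?Fc. w i = []" using qw unfolding q_def by (auto split: if_splits)
  have "\<forall>i\<in>{1..N}. w i = []"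
  proof
    fix i assume i: "i \<in> {1..N}"
    show "w i = []"
    proof (cases "i \<in> F")
      case True then show ?thesis using kz[OF wL True] cw by blast
    next
      case False then show ?thesis using wFc i by blast
    qed
  qed
  hence wt: "w = tempty" using w_empty wL by blast
  define k where "k = 1 / c tempty"
  have c0: "c tempty \<noteq> 0" using cw wt by simp
  have a'A: "osc k a \<in> Aalg L" by (rule Aalg_closed(2)[OF aA aA])
  have "osc k a \<circ> QG L d ?Fc = mop L (\<lambda>w. k * c w * q w)"
    unfolding ac osc_mop QG by (subst mop_comp[OF q_bnd[of ?Fc, folded q_def]]) simp
  also have "\<dots> = Qempty L" unfolding Qempty_mop
  proof (rule mop_cong)
    fix v assume vL: "v \<in> L"
    show "k * c v * q v = (if v = tempty then 1 else 0)"
    proof (cases "v = tempty")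
      case True then show ?thesis using c0 unfolding k_def q_def by simp
    next
      case False
      show ?thesis
      proof (cases "q v = 0")
        case True then show ?thesis using False by simp
      next
        case qv: False
        hence vFc: "\<forall>i\<in>?Fc. v i = []" unfolding q_def by (auto split: if_splits)
        obtain i where i: "i \<in> {1..N}" "v i \<noteq> []" using nonempty_coord[OF vL False] by blast
        have "i \<in> F" using i vFc by blast
        hence "c v = 0" using kz[OF vL _ i(2)] by blast
        then show ?thesis using False by simp
      qed
    qed
  qed
  finally show ?thesis using a'A by blast
qed

lemma II_R:
  assumes F: "F \<subseteq> {1..N}" and aA: "a \<in> Aalg L" and eq: "a \<circ> QG L d ({1..N} - F) = Qempty L"
  shows "\<forall>i\<in>F. \<forall>k\<in>{1..d}. delta i k \<in> L \<longrightarrow> (\<exists>\<mu>\<in>L. \<mu> \<star> delta i k \<notin> L)"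
proof (intro ballI impI)
  let ?Fc = "{1..N} - F"
  define q :: "tup \<Rightarrow> complex" where "q = (\<lambda>v. if \<forall>i\<in>?Fc. v i = [] then 1 else (0::complex))"
  have QG: "QG L d ?Fc = mop L q" unfolding q_def by (rule QG_mop) simp
  fix i k assume i: "i \<in> F" and k: "k \<in> {1..d}" and dL: "delta i k \<in> L"
  show "\<exists>\<mu>\<in>L. \<mu> \<star> delta i k \<notin> L"
  proof (rule ccontr)
    assume "\<not> ?thesis"
    hence all: "\<forall>\<mu>\<in>L. \<mu> \<star> delta i k \<in> L" by blast
    have h: "\<forall>\<mu>\<in>L. \<mu> \<star> tempty \<in> L \<longleftrightarrow> \<mu> \<star> delta i k \<in> L" using all left by auto
    have "a \<in> DS L tempty (delta i k)" by (rule Aalg_DS[OF E dL h fl_axioms aA])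
    then obtain c where ac: "a = mop L c" and bc: "bnd L c" and cxy: "c tempty = c (delta i k)"
      unfolding DS_def by blast
    have heq: "mop L (\<lambda>w. c w * q w) = mop L (\<lambda>w. if w = tempty then 1 else 0)"
      using eq unfolding ac QG Qempty_mop q_def by (simp add: mop_comp[OF q_bnd])
    have e1: "c tempty * q tempty = 1" using mop_eq_iff[OF heq E] by simp
    have e2: "c (delta i k) * q (delta i k) = (if delta i k = tempty then 1 else 0)"
      using mop_eq_iff[OF heq dL] by simp
    have qt: "q tempty = 1" unfolding q_def by simp
    have dne: "delta i k \<noteq> tempty"
    proof
      assume "delta i k = tempty"
      hence "delta i k i = tempty i" by simp
      thus False by (simp add: delta_def)
    qed
    have qd: "q (delta i k) = 1" unfolding q_def using i by (auto simp: delta_def)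
    show False using e1 e2 qt qd dne cxy by simp
  qed
qed

lemma R_I:
  assumes F: "F \<subseteq> {1..N}"
    and R: "\<forall>i\<in>F. \<forall>k\<in>{1..d}. delta i k \<in> L \<longrightarrow> (\<exists>\<mu>\<in>L. \<mu> \<star> delta i k \<notin> L)"
  shows "\<exists>a. a \<in> (\<Inter>i\<in>F. kerphi L d i) \<and> a \<circ> QG L d ({1..N} - F) \<noteq> 0"
proof -
  let ?Fc = "{1..N} - F"
  define q :: "tup \<Rightarrow> complex" where "q = (\<lambda>v. if \<forall>i\<in>?Fc. v i = [] then 1 else (0::complex))"
  have QG: "QG L d ?Fc = mop L q" unfolding q_def by (rule QG_mop) simp
  define KK where "KK = {p \<in> F \<times> {1..d}. delta (fst p) (snd p) \<in> L}"
  have fin: "finite KK"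
  proof -
    have "finite F" using F finite_subset by blast
    thus ?thesis unfolding KK_def by simp
  qed
  have "\<forall>p\<in>KK. \<exists>\<mu>. \<mu> \<in> L \<and> \<mu> \<star> delta (fst p) (snd p) \<notin> L"
  proof
    fix p assume "p \<in> KK"
    hence "fst p \<in> F" "snd p \<in> {1..d}" "delta (fst p) (snd p) \<in> L" unfolding KK_def by auto
    thus "\<exists>\<mu>. \<mu> \<in> L \<and> \<mu> \<star> delta (fst p) (snd p) \<notin> L" using R by blast
  qed
  then obtain m where m: "\<forall>p\<in>KK. m p \<in> L \<and> m p \<star> delta (fst p) (snd p) \<notin> L"
    using bchoice[of KK "\<lambda>p \<mu>. \<mu> \<in> L \<and> \<mu> \<star> delta (fst p) (snd p) \<notin> L"] by blast
  define c where "c = (\<lambda>w. if \<forall>p\<in>KK. m p \<star> w \<in> L then 1 else (0::complex))"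
  have aA: "mop L c \<in> Aalg L" unfolding c_def by (rule ind_A[OF fin]) (use m in blast)
  have ker: "mop L c \<in> kerphi L d i" if i: "i \<in> F" for i
  proof (rule kernel_I[OF aA refl], intro ballI impI)
    fix w assume wL: "w \<in> L" and ne: "w i \<noteq> []"
    obtain k w' where k: "k \<in> {1..d}" and dL: "delta i k \<in> L" and w': "w' \<in> L" and eq: "w = delta i k \<star> w'"
      using dec[OF wL ne] by blast
    have p: "(i, k) \<in> KK" unfolding KK_def using i k dL by simp
    have "m (i, k) \<star> w \<notin> L"
    proof
      assume "m (i, k) \<star> w \<in> L"
      hence "m (i, k) \<star> delta i k \<star> w' \<in> L" unfolding eq tcat_assoc .
      hence "m (i, k) \<star> delta i k \<in> L" by (rule left)
      thus False using m p by auto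
    qed
    thus "c w = 0" unfolding c_def using p by auto
  qed
  have nz: "mop L c \<circ> QG L d ?Fc \<noteq> 0"
  proof
    assume "mop L c \<circ> QG L d ?Fc = 0"
    hence "mop L (\<lambda>w. c w * q w) = 0" unfolding QG q_def by (simp add: mop_comp[OF q_bnd])
    hence "c tempty * q tempty = 0" using mop_zero_iff[OF _ E] by blast
    moreover have "c tempty = 1" unfolding c_def using m by simp
    moreover have "q tempty = 1" unfolding q_def by simp
    ultimately show False by simp
  qed
  show ?thesis using ker nz by blast
qed

end



context fl2 begin

lemma QG_empty_comp: assumes "a \<in> Aalg L" shows "a \<circ> QG L d {} = a"
proof -
  obtain c where bc: "bnd L c" and ac: "a = mop L c" using A_mop[OF assms] by blast
  have "QG L d {} = mop L (\<lambda>_. 1)" using QG_mop[of "{}"] by simp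
  thus ?thesis unfolding ac by (simp add: mop_comp)
qed

lemma II_vi: "(\<exists>a\<in>Aalg L. a \<circ> QG L d {} = Qempty L) \<longleftrightarrow> Qempty L \<in> Aalg L"
  using QG_empty_comp by auto

lemma ker_all:
  assumes N: "N \<ge> 1" and a: "a \<in> (\<Inter>i\<in>{1..N}. kerphi L d i)"
  shows "a \<in> Aalg L \<and> (\<exists>c0. a = osc c0 (Qempty L))"
proof -
  have ak: "a \<in> kerphi L d i" if "i \<in> {1..N}" for i using a that by blast
  have aA: "a \<in> Aalg L" using ak[of 1] N unfolding kerphi_def by auto
  obtain c where bc: "bnd L c" and ac: "a = mop L c" using A_mop[OF aA] by blast
  have "a = mop L (\<lambda>w. c tempty * (if w = tempty then 1 else 0))"
    unfolding ac
  proof (rule mop_cong)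
    fix w assume wL: "w \<in> L"
    show "c w = c tempty * (if w = tempty then 1 else 0)"
    proof (cases "w = tempty")
      case True then show ?thesis by simp
    next
      case False
      obtain i where i: "i \<in> {1..N}" "w i \<noteq> []" using nonempty_coord[OF wL False] by blast
      have "c w = 0" by (rule K[OF ak[OF i(1)] ac wL i(2)])
      then show ?thesis using False by simp
    qed
  qed
  hence "a = osc (c tempty) (Qempty L)" unfolding Qempty_mop osc_mop .
  thus ?thesis using aA by blast
qed

lemma osc_Q_ker: assumes "Qempty L \<in> Aalg L" shows "osc c0 (Qempty L) \<in> kerphi L d i"
proof -
  have A: "osc c0 (Qempty L) \<in> Aalg L" by (rule Aalg_closed(2)[OF assms assms])
  have e: "osc c0 (Qempty L) = mop L (\<lambda>w. c0 * (if w = tempty then 1 else 0))"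
    unfolding Qempty_mop osc_mop ..
  show ?thesis
  proof (rule kernel_I[OF A e], intro ballI impI)
    fix w assume "w \<in> L" "w i \<noteq> []"
    hence "w \<noteq> tempty" by auto
    thus "c0 * (if w = tempty then 1 else 0) = 0" by simp
  qed
qed

lemma osc1: "osc 1 x = x"
  by (simp add: osc_def vsc_def)

lemma Qempty_nz: "Qempty L \<noteq> 0"
proof
  assume "Qempty L = 0"
  hence "mop L (\<lambda>w. if w = tempty then 1 else 0) = 0" unfolding Qempty_mop .
  hence "(if tempty = tempty then 1 else (0::complex)) = 0" using mop_zero_iff[OF _ E] by blast
  thus False by simp
qed

lemma osc_osc: "osc k (osc c x) = osc (k * c) x"
  by (simp add: osc_def vsc_def fun_eq_iff)

lemma osc0: "osc 0 x = 0"
  by (simp add: osc_def vsc_def fun_eq_iff)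

lemma full:
  assumes N: "N \<ge> 1" and R0: "R \<longleftrightarrow> Qempty L \<in> Aalg L"
  shows "(R \<longleftrightarrow> (\<Inter>i\<in>{1..N}. kerphi L d i) = {osc c (Qempty L) | c. True})
       \<and> (R \<longleftrightarrow> (\<Inter>i\<in>{1..N}. kerphi L d i) \<noteq> {0})
       \<and> (R \<longleftrightarrow> Qempty L \<in> Aalg L)"
proof -
  have iv: "(\<Inter>i\<in>{1..N}. kerphi L d i) = {osc c (Qempty L) | c. True}" if Q: "Qempty L \<in> Aalg L"
  proof
    show "(\<Inter>i\<in>{1..N}. kerphi L d i) \<subseteq> {osc c (Qempty L) | c. True}"
    proof
      fix a assume "a \<in> (\<Inter>i\<in>{1..N}. kerphi L d i)"
      then obtain c0 where "a = osc c0 (Qempty L)" using ker_all[OF N] by blast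
      thus "a \<in> {osc c (Qempty L) | c. True}" by blast
    qed
    show "{osc c (Qempty L) | c. True} \<subseteq> (\<Inter>i\<in>{1..N}. kerphi L d i)"
    proof
      fix a assume "a \<in> {osc c (Qempty L) | c. True}"
      then obtain c0 where "a = osc c0 (Qempty L)" by blast
      thus "a \<in> (\<Inter>i\<in>{1..N}. kerphi L d i)" using osc_Q_ker[OF Q] by blast
    qed
  qed
  have iv': "Qempty L \<in> Aalg L" if h: "(\<Inter>i\<in>{1..N}. kerphi L d i) = {osc c (Qempty L) | c. True}"
  proof -
    have "osc 1 (Qempty L) \<in> (\<Inter>i\<in>{1..N}. kerphi L d i)" using h by blast
    hence "Qempty L \<in> kerphi L d 1" using N osc1 by auto
    thus ?thesis unfolding kerphi_def by blast
  qed
  have v: "(\<Inter>i\<in>{1..N}. kerphi L d i) \<noteq> {0}" if Q: "Qempty L \<in> Aalg L"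
  proof
    assume h: "(\<Inter>i\<in>{1..N}. kerphi L d i) = {0}"
    have "osc 1 (Qempty L) \<in> (\<Inter>i\<in>{1..N}. kerphi L d i)" using iv[OF Q] by blast
    thus False using h osc1 Qempty_nz by auto
  qed
  have v': "Qempty L \<in> Aalg L" if h: "(\<Inter>i\<in>{1..N}. kerphi L d i) \<noteq> {0}"
  proof -
    have "0 \<in> (\<Inter>i\<in>{1..N}. kerphi L d i)" using zero_ker by blast
    then obtain a where a: "a \<in> (\<Inter>i\<in>{1..N}. kerphi L d i)" and anz: "a \<noteq> 0" using h by blast
    obtain c0 where aA: "a \<in> Aalg L" and ac: "a = osc c0 (Qempty L)" using ker_all[OF N a] by blast
    have c0: "c0 \<noteq> 0" using anz ac osc0 by auto
    have "osc (1 / c0) a \<in> Aalg L" by (rule Aalg_closed(2)[OF aA aA])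
    moreover have "osc (1 / c0) a = Qempty L" unfolding ac osc_osc using c0 osc1 by simp
    ultimately show ?thesis by simp
  qed
  show ?thesis
  proof (intro conjI)
    show "R \<longleftrightarrow> (\<Inter>i\<in>{1..N}. kerphi L d i) = {osc c (Qempty L) | c. True}"
    proof
      assume R then show "(\<Inter>i\<in>{1..N}. kerphi L d i) = {osc c (Qempty L) | c. True}" using R0 iv by simp
    next
      assume "(\<Inter>i\<in>{1..N}. kerphi L d i) = {osc c (Qempty L) | c. True}"
      then show R using R0 iv' by simp
    qed
    show "R \<longleftrightarrow> (\<Inter>i\<in>{1..N}. kerphi L d i) \<noteq> {0}"
    proof
      assume R then show "(\<Inter>i\<in>{1..N}. kerphi L d i) \<noteq> {0}" using R0 v by simp
    next
      assume "(\<Inter>i\<in>{1..N}. kerphi L d i) \<noteq> {0}"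
      then show R using R0 v' by simp
    qed
    show "R \<longleftrightarrow> Qempty L \<in> Aalg L" by (rule R0)
  qed
qed

end



theorem proposition9p17:
  fixes d N :: nat and L :: "tup set" and F :: "nat set"
  assumes "factorial_language d N L"
    and "F \<noteq> {}" and "F \<subseteq> {1..N}"
  defines "Fc \<equiv> {1..N} - F"
  shows "((\<exists>a. a \<in> (\<Inter>i\<in>F. kerphi L d i) \<and> a \<circ> QG L d Fc \<noteq> 0)
            \<longleftrightarrow> (\<exists>a\<in>Aalg L. a \<circ> QG L d Fc = Qempty L))
       \<and> ((\<exists>a\<in>Aalg L. a \<circ> QG L d Fc = Qempty L)
            \<longleftrightarrow> (\<forall>i\<in>F. \<forall>k\<in>{1..d}. delta i k \<in> L \<longrightarrow> (\<exists>\<mu>\<in>L. \<mu> \<star> delta i k \<notin> L)))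
       \<and> (F = {1..N} \<longrightarrow>
            (((\<forall>i\<in>F. \<forall>k\<in>{1..d}. delta i k \<in> L \<longrightarrow> (\<exists>\<mu>\<in>L. \<mu> \<star> delta i k \<notin> L))
               \<longleftrightarrow> (\<Inter>i\<in>{1..N}. kerphi L d i) = {osc c (Qempty L) | c. True})
           \<and> ((\<forall>i\<in>F. \<forall>k\<in>{1..d}. delta i k \<in> L \<longrightarrow> (\<exists>\<mu>\<in>L. \<mu> \<star> delta i k \<notin> L))
               \<longleftrightarrow> (\<Inter>i\<in>{1..N}. kerphi L d i) \<noteq> {0})
           \<and> ((\<forall>i\<in>F. \<forall>k\<in>{1..d}. delta i k \<in> L \<longrightarrow> (\<exists>\<mu>\<in>L. \<mu> \<star> delta i k \<notin> L))
               \<longleftrightarrow> Qempty L \<in> Aalg L)))"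
proof -
  have N: "N \<ge> 1" using assms(2,3) by fastforce
  have flv: "fl d N L" by (rule fl.intro[OF assms(1)])
  have E: "tempty \<in> L" by (rule fl.tempty_in[OF flv N])
  interpret fl2 d N L by (rule fl2.intro[OF flv fl2_axioms.intro[OF E]])
  let ?R = "\<forall>i\<in>F. \<forall>k\<in>{1..d}. delta i k \<in> L \<longrightarrow> (\<exists>\<mu>\<in>L. \<mu> \<star> delta i k \<notin> L)"
  let ?I = "\<exists>a. a \<in> (\<Inter>i\<in>F. kerphi L d i) \<and> a \<circ> QG L d Fc \<noteq> 0"
  let ?II = "\<exists>a\<in>Aalg L. a \<circ> QG L d Fc = Qempty L"
  have I_II': "?I \<Longrightarrow> ?II" unfolding Fc_def using I_II[OF assms(3) assms(2)] by blast
  have II_R': "?II \<Longrightarrow> ?R" unfolding Fc_def using II_R[OF assms(3)] by blast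
  have R_I': "?R \<Longrightarrow> ?I" unfolding Fc_def by (rule R_I[OF assms(3)])
  have A1: "?I \<longleftrightarrow> ?II" using I_II' II_R' R_I' by blast
  have A2: "?II \<longleftrightarrow> ?R" using I_II' II_R' R_I' by blast
  have A3: "F = {1..N} \<longrightarrow>
            ((?R \<longleftrightarrow> (\<Inter>i\<in>{1..N}. kerphi L d i) = {osc c (Qempty L) | c. True})
           \<and> (?R \<longleftrightarrow> (\<Inter>i\<in>{1..N}. kerphi L d i) \<noteq> {0})
           \<and> (?R \<longleftrightarrow> Qempty L \<in> Aalg L))"
  proof
    assume FN: "F = {1..N}"
    hence "Fc = {}" unfolding Fc_def by simp
    hence "?II \<longleftrightarrow> Qempty L \<in> Aalg L" using II_vi by simp
    hence R0: "?R \<longleftrightarrow> Qempty L \<in> Aalg L" using A2 by blast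
    show "(?R \<longleftrightarrow> (\<Inter>i\<in>{1..N}. kerphi L d i) = {osc c (Qempty L) | c. True})
           \<and> (?R \<longleftrightarrow> (\<Inter>i\<in>{1..N}. kerphi L d i) \<noteq> {0})
           \<and> (?R \<longleftrightarrow> Qempty L \<in> Aalg L)" by (rule full[OF N R0])
  qed
  show ?thesis using A1 A2 A3 by blast
qed


end
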